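(* Let $q\ge 2$. For all integers $m,n\ge 1$, the number $B_m^{(-n)}(q)$ of $q$-ary strong lonesum $m\times n$ matrices equals $$1+\sum_{j=1}^{\min(m,n)}\ \sum_{\substack{(m_0,\ldots,m_j)\in\mathcal{S}_m^j\\ (n_0,\ldots,n_j)\in\mathcal{S}_n^j}}\binom{m}{m_0,m_1,\ldots,m_j}\binom{n}{n_0,n_1,\ldots,n_j}\prod_{i=1}^{j}f_q(m_i,n_{j+1-i}),$$ where $$f_q(r,s)=1+(q-2)rs+r\big((q-1)^s-(q-2)s-1\big)+s\big((q-1)^r-(q-2)r-1\big).$$
   Context: A $q$-ary matrix has entries in $\{0,1,\ldots,q-1\}$; a $q$-ary $m\times n$ matrix is a strong lonesum matrix if no other $q$-ary $m\times n$ matrix has the same row sums and column sums. For $j\ge 1$ and $l\ge 1$, $\mathcal{S}_l^j=\{(l_0,l_1,\ldots,l_j)\in\mathbb{Z}^{j+1}: \sum_{i=0}^j l_i=l,\ l_0\ge 0,\ l_i\ge 1 \text{ for } 1\le i\le j\}$. $\binom{l}{l_0,\ldots,l_j}=\frac{l!}{l_0!\cdots l_j!}$ is the multinomial coefficient. *)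

theory Defs
  imports Main
begin

text \<open>A q-ary m x n matrix is represented as a function nat => nat => nat with
entries < q on the index range {0..<m} x {0..<n} and 0 outside (extensional).\<close>

definition qary_matrix :: "nat \<Rightarrow> nat \<Rightarrow> nat \<Rightarrow> (nat \<Rightarrow> nat \<Rightarrow> nat) \<Rightarrow> bool" where
  "qary_matrix q m n A \<longleftrightarrow>
     (\<forall>i j. (i < m \<and> j < n \<longrightarrow> A i j < q) \<and> (\<not> (i < m \<and> j < n) \<longrightarrow> A i j = 0))"

definition row_sum :: "nat \<Rightarrow> (nat \<Rightarrow> nat \<Rightarrow> nat) \<Rightarrow> nat \<Rightarrow> nat" where
  "row_sum n A i = (\<Sum>j<n. A i j)"

definition col_sum :: "nat \<Rightarrow> (nat \<Rightarrow> nat \<Rightarrow> nat) \<Rightarrow> nat \<Rightarrow> nat" where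
  "col_sum m A j = (\<Sum>i<m. A i j)"

definition strong_lonesum :: "nat \<Rightarrow> nat \<Rightarrow> nat \<Rightarrow> (nat \<Rightarrow> nat \<Rightarrow> nat) \<Rightarrow> bool" where
  "strong_lonesum q m n A \<longleftrightarrow> qary_matrix q m n A \<and>
     (\<forall>B. qary_matrix q m n B \<and> (\<forall>i<m. row_sum n B i = row_sum n A i)
          \<and> (\<forall>j<n. col_sum m B j = col_sum m A j) \<longrightarrow> B = A)"

definition num_strong_lonesum :: "nat \<Rightarrow> nat \<Rightarrow> nat \<Rightarrow> nat" where
  "num_strong_lonesum q m n = card {A. strong_lonesum q m n A}"

text \<open>S_l^j: tuples (l_0,...,l_j), represented as lists of length j+1, summing to l,
with l_0 >= 0 and l_i >= 1 for 1 <= i <= j.\<close>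
definition S_set :: "nat \<Rightarrow> nat \<Rightarrow> nat list set" where
  "S_set l j = {ls. length ls = j + 1 \<and> sum_list ls = l \<and> (\<forall>i\<in>{1..j}. ls ! i \<ge> 1)}"

definition multinom :: "nat \<Rightarrow> nat list \<Rightarrow> nat" where
  "multinom l ls = fact l div (\<Prod>x\<leftarrow>ls. fact x)"

definition f_q :: "nat \<Rightarrow> nat \<Rightarrow> nat \<Rightarrow> int" where
  "f_q q r s = 1 + (int q - 2) * int r * int s
      + int r * ((int q - 1) ^ s - (int q - 2) * int s - 1)
      + int s * ((int q - 1) ^ r - (int q - 2) * int r - 1)"

end

theory Submission
  imports Defs "HOL-Library.FuncSet"
begin


definition qm :: "nat \<Rightarrow> nat set \<Rightarrow> nat set \<Rightarrow> (nat \<Rightarrow> nat \<Rightarrow> nat) \<Rightarrow> bool" where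
  "qm q I J A \<longleftrightarrow> (\<forall>i c. (i \<in> I \<and> c \<in> J \<longrightarrow> A i c < q) \<and> (\<not> (i \<in> I \<and> c \<in> J) \<longrightarrow> A i c = 0))"

definition SF :: "nat \<Rightarrow> nat set \<Rightarrow> nat set \<Rightarrow> (nat \<Rightarrow> nat \<Rightarrow> nat) \<Rightarrow> bool" where
  "SF q I J A \<longleftrightarrow> (\<forall>i\<in>I. \<forall>i'\<in>I. \<forall>c\<in>J. \<forall>c'\<in>J.
      i \<noteq> i' \<and> c \<noteq> c' \<and> 0 < A i c \<and> 0 < A i' c' \<longrightarrow> A i c' = q - 1 \<or> A i' c = q - 1)"

definition GBset :: "nat \<Rightarrow> nat set \<Rightarrow> nat set \<Rightarrow> (nat \<Rightarrow> nat \<Rightarrow> nat) set" where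
  "GBset q R S = {B. qm q R S B \<and> (\<forall>i\<in>R. \<forall>c\<in>S. 0 < B i c) \<and> SF q R S B}"




lemma S_set_finite: "finite (S_set l j)"
proof -
  have "S_set l j \<subseteq> {xs. set xs \<subseteq> {..l} \<and> length xs = j + 1}"
    unfolding S_set_def
    by (auto simp: member_le_sum_list)
  then show ?thesis by (rule finite_subset) (rule finite_lists_length_eq, simp)
qed

lemma S_set_le: assumes "ls \<in> S_set l j" shows "j \<le> l"
proof -
  have len: "length ls = j + 1" and sl: "sum_list ls = l" and ge: "\<forall>i\<in>{1..j}. ls ! i \<ge> 1"
    using assms unfolding S_set_def by auto
  have "j = (\<Sum>i\<in>{1..j}. (1::nat))" by simp
  also have "\<dots> \<le> (\<Sum>i\<in>{1..j}. ls ! i)" by (rule sum_mono) (use ge in auto)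
  also have "\<dots> \<le> (\<Sum>i<length ls. ls ! i)" by (rule sum_mono2) (use len in auto)
  also have "\<dots> = l" using sl by (simp add: sum_list_sum_nth atLeast0LessThan)
  finally show ?thesis .
qed

lemma S_set_0: "S_set l 0 = {[l]}"
  unfolding S_set_def by (auto simp: length_Suc_conv)

lemma S_set_Suc_last:
  "S_set m (Suc j) = (\<lambda>(r,ms). ms @ [r]) ` (SIGMA r:{1..m}. S_set (m-r) j)"
proof (intro set_eqI iffI)
  fix ls assume ls: "ls \<in> S_set m (Suc j)"
  hence len: "length ls = Suc j + 1" and sl: "sum_list ls = m" and ge: "\<forall>i\<in>{1..Suc j}. ls ! i \<ge> 1"
    unfolding S_set_def by auto
  have ne: "ls \<noteq> []" using len by auto
  let ?r = "last ls" let ?ms = "butlast ls"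
  have eq: "ls = ?ms @ [?r]" using ne by simp
  have "ls ! Suc j \<ge> 1" using ge by auto
  hence r1: "?r \<ge> 1" using len ne by (simp add: last_conv_nth)
  have "sum_list ls = sum_list ?ms + ?r" by (subst eq) simp
  hence rm: "?r \<le> m" "sum_list ?ms = m - ?r" using sl by auto
  have "?ms \<in> S_set (m - ?r) j"
    unfolding S_set_def using len rm ge by (auto simp: nth_butlast)
  thus "ls \<in> (\<lambda>(r,ms). ms @ [r]) ` (SIGMA r:{1..m}. S_set (m-r) j)"
    using r1 rm by (intro image_eqI[where x="(?r,?ms)"]) (use eq in auto)
next
  fix ls assume "ls \<in> (\<lambda>(r,ms). ms @ [r]) ` (SIGMA r:{1..m}. S_set (m-r) j)"
  then obtain r ms where r: "r \<in> {1..m}" and ms: "ms \<in> S_set (m-r) j" and ls: "ls = ms @ [r]" by auto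
  from ms have len: "length ms = j + 1" and sl: "sum_list ms = m - r" and ge: "\<forall>i\<in>{1..j}. ms ! i \<ge> 1"
    unfolding S_set_def by auto
  show "ls \<in> S_set m (Suc j)"
    unfolding S_set_def using r len sl ge
    by (auto simp: ls nth_append le_Suc_eq)
qed

lemma S_set_Suc_last_inj: "inj_on (\<lambda>(r,ms). ms @ [r]) A"
  by (auto simp: inj_on_def)

definition ins1 :: "nat \<Rightarrow> nat list \<Rightarrow> nat list" where
  "ins1 s ns = hd ns # s # tl ns"

lemma S_set_Suc_ins:
  "S_set n (Suc j) = (\<lambda>(s,ns). ins1 s ns) ` (SIGMA s:{1..n}. S_set (n-s) j)"
proof (intro set_eqI iffI)
  fix ls assume ls: "ls \<in> S_set n (Suc j)"
  hence len: "length ls = Suc j + 1" and sl: "sum_list ls = n" and ge: "\<forall>i\<in>{1..Suc j}. ls ! i \<ge> 1"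
    unfolding S_set_def by auto
  then obtain a s rest where eq: "ls = a # s # rest"
    by (metis Suc_eq_plus1 length_Suc_conv)
  have lr: "length rest = j" using len eq by simp
  have s1: "s \<ge> 1" using ge[rule_format, of 1] eq by simp
  have sn: "s \<le> n" "sum_list (a # rest) = n - s" using sl eq by auto
  have "a # rest \<in> S_set (n - s) j"
    unfolding S_set_def
  proof (intro CollectI conjI ballI)
    fix i assume i: "i \<in> {1..j}"
    have "ls ! Suc i \<ge> 1" using ge i by auto
    thus "(a # rest) ! i \<ge> 1" using i eq by (cases i) auto
  qed (use lr sn in auto)
  thus "ls \<in> (\<lambda>(s,ns). ins1 s ns) ` (SIGMA s:{1..n}. S_set (n-s) j)"
    using s1 sn by (intro image_eqI[where x="(s, a # rest)"]) (auto simp: eq ins1_def)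
next
  fix ls assume "ls \<in> (\<lambda>(s,ns). ins1 s ns) ` (SIGMA s:{1..n}. S_set (n-s) j)"
  then obtain s ns where s: "s \<in> {1..n}" and ns: "ns \<in> S_set (n-s) j" and ls: "ls = ins1 s ns" by auto
  from ns have len: "length ns = j + 1" and sl: "sum_list ns = n - s" and ge: "\<forall>i\<in>{1..j}. ns ! i \<ge> 1"
    unfolding S_set_def by auto
  then obtain a rest where eq: "ns = a # rest" by (cases ns) auto
  have ls': "ls = a # s # rest" using ls eq by (simp add: ins1_def)
  show "ls \<in> S_set n (Suc j)"
    unfolding S_set_def
  proof (intro CollectI conjI ballI)
    fix i assume i: "i \<in> {1..Suc j}"
    show "ls ! i \<ge> 1"
    proof (cases "i = 1")
      case True thus ?thesis using s ls' by simp
    next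
      case False
      then obtain k where k: "i = Suc (Suc k)" "k < j" using i by (cases i; cases "i - 1") auto
      have "ns ! Suc k \<ge> 1" using ge k by auto
      thus ?thesis using k ls' eq by simp
    qed
  qed (use len sl s eq ls' in auto)
qed

lemma S_set_Suc_ins_inj: "inj_on (\<lambda>(s,ns). ins1 s ns) (SIGMA s:{1..n}. S_set (n-s) j)"
proof (rule inj_onI, clarify)
  fix s ns s' ns' assume "ns \<in> S_set (n-s) j" "ns' \<in> S_set (n-s') j" "ins1 s ns = ins1 s' ns'"
  moreover have "ns \<noteq> []" "ns' \<noteq> []" using calculation unfolding S_set_def by auto
  ultimately show "s = s' \<and> ns = ns'"
    by (cases ns; cases ns') (auto simp: ins1_def)
qed

lemma prod_fact_dvd: "sum_list ls = l \<Longrightarrow> prod_list (map fact ls) dvd (fact l :: nat)"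
proof (induction ls arbitrary: l)
  case Nil thus ?case by simp
next
  case (Cons x xs)
  have "fact l = fact x * fact (sum_list xs) * (l choose x)"
  proof -
    have "l - x = sum_list xs" using Cons.prems by simp
    thus ?thesis using binomial_fact_lemma[of x l] Cons.prems by simp
  qed
  thus ?case using Cons.IH[of "sum_list xs"] by (simp add: mult_dvd_mono)
qed

lemma multinom_step:
  assumes "sum_list xs = n - s" "s \<le> n" "(prod_list (map fact ys) :: nat) = fact s * prod_list (map fact xs)"
  shows "multinom n ys = (n choose s) * multinom (n - s) xs"
proof -
  let ?P = "prod_list (map fact xs) :: nat"
  have Ppos: "?P > 0" by (induction xs) auto
  obtain k where k: "fact (n - s) = ?P * k" using prod_fact_dvd[OF assms(1)] by (auto elim: dvdE)
  have mk: "multinom (n - s) xs = k" unfolding multinom_def using k Ppos by simp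
  have "fact n = fact s * fact (n - s) * (n choose s)" using binomial_fact_lemma[OF assms(2)] by simp
  also have "\<dots> = (fact s * ?P) * ((n choose s) * k)" using k by simp
  finally have fn: "fact n = (fact s * ?P) * ((n choose s) * k)" .
  have "multinom n ys = fact n div (fact s * ?P)" by (simp only: multinom_def assms(3))
  also have "\<dots> = ((fact s * ?P) * ((n choose s) * k)) div (fact s * ?P)" using fn by simp
  also have "\<dots> = (n choose s) * k" using Ppos by (simp del: mult.assoc)
  finally show ?thesis using mk by simp
qed

definition P :: "nat \<Rightarrow> nat \<Rightarrow> nat \<Rightarrow> nat \<Rightarrow> int" where
  "P q j m n = (\<Sum>ms\<in>S_set m j. \<Sum>ns\<in>S_set n j.
           int (multinom m ms) * int (multinom n ns) *
           (\<Prod>i=1..j. f_q q (ms ! i) (ns ! (j + 1 - i))))"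

lemma P_0: "P q 0 m n = 1"
  unfolding P_def S_set_0 multinom_def by simp

lemma P_big: assumes "j > m \<or> j > n" shows "P q j m n = 0"
proof -
  have "S_set m j = {} \<or> S_set n j = {}" using assms S_set_le by fastforce
  thus ?thesis unfolding P_def by auto
qed

definition T :: "nat \<Rightarrow> nat \<Rightarrow> nat \<Rightarrow> nat \<Rightarrow> nat list \<Rightarrow> nat list \<Rightarrow> int" where
  "T q j m n ms ns = int (multinom m ms) * int (multinom n ns) *
           (\<Prod>i=1..j. f_q q (ms ! i) (ns ! (j + 1 - i)))"

lemma T_step:
  assumes r: "r \<in> {1..m}" and ms: "ms \<in> S_set (m-r) j" and s: "s \<in> {1..n}" and ns: "ns \<in> S_set (n-s) j"
  shows "T q (Suc j) m n (ms @ [r]) (ins1 s ns) =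
     int (m choose r) * int (n choose s) * f_q q r s * T q j (m-r) (n-s) ms ns"
proof -
  from ms have lm: "length ms = j + 1" and sm: "sum_list ms = m - r" unfolding S_set_def by auto
  from ns have ln: "length ns = j + 1" and sn: "sum_list ns = n - s" unfolding S_set_def by auto
  then obtain a rest where eq: "ns = a # rest" by (cases ns) auto
  have m1: "multinom m (ms @ [r]) = (m choose r) * multinom (m - r) ms"
    by (rule multinom_step) (use sm r in auto)
  have m2: "multinom n (ins1 s ns) = (n choose s) * multinom (n - s) ns"
    by (rule multinom_step) (use sn s in \<open>auto simp: eq ins1_def\<close>)
  have pr: "(\<Prod>i=1..Suc j. f_q q ((ms @ [r]) ! i) (ins1 s ns ! (Suc j + 1 - i)))
      = (\<Prod>i=1..j. f_q q (ms ! i) (ns ! (j + 1 - i))) * f_q q r s"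
  proof -
    have "(\<Prod>i=1..Suc j. f_q q ((ms @ [r]) ! i) (ins1 s ns ! (Suc j + 1 - i)))
       = (\<Prod>i=1..j. f_q q ((ms @ [r]) ! i) (ins1 s ns ! (Suc j + 1 - i))) *
         f_q q ((ms @ [r]) ! Suc j) (ins1 s ns ! 1)"
      by (simp add: prod.cl_ivl_Suc)
    also have "(\<Prod>i=1..j. f_q q ((ms @ [r]) ! i) (ins1 s ns ! (Suc j + 1 - i)))
       = (\<Prod>i=1..j. f_q q (ms ! i) (ns ! (j + 1 - i)))"
    proof (rule prod.cong[OF refl])
      fix i assume i: "i \<in> {1..j}"
      have "(ms @ [r]) ! i = ms ! i" using i lm by (simp add: nth_append)
      moreover have "ins1 s ns ! (Suc j + 1 - i) = ns ! (j + 1 - i)"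
      proof -
        have "Suc j + 1 - i = Suc (Suc (j - i))" using i by auto
        moreover have "j + 1 - i = Suc (j - i)" using i by auto
        ultimately show ?thesis by (simp add: eq ins1_def)
      qed
      ultimately show "f_q q ((ms @ [r]) ! i) (ins1 s ns ! (Suc j + 1 - i)) = f_q q (ms ! i) (ns ! (j + 1 - i))"
        by simp
    qed
    also have "(ms @ [r]) ! Suc j = r" using lm by (simp add: nth_append)
    also have "ins1 s ns ! 1 = s" by (simp add: ins1_def)
    finally show ?thesis .
  qed
  show ?thesis unfolding T_def m1 m2 pr by (simp add: algebra_simps)
qed

lemma P_Suc: "P q (Suc j) m n = (\<Sum>r\<in>{1..m}. \<Sum>s\<in>{1..n}.
    int (m choose r) * int (n choose s) * f_q q r s * P q j (m-r) (n-s))"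
proof -
  have fin: "\<And>l j. finite (S_set l j)" by (rule S_set_finite)
  have "P q (Suc j) m n = (\<Sum>ls\<in>S_set m (Suc j). \<Sum>ks\<in>S_set n (Suc j). T q (Suc j) m n ls ks)"
    unfolding P_def T_def by simp
  also have "\<dots> = (\<Sum>(r,ms)\<in>(SIGMA r:{1..m}. S_set (m-r) j). \<Sum>(s,ns)\<in>(SIGMA s:{1..n}. S_set (n-s) j).
       T q (Suc j) m n (ms @ [r]) (ins1 s ns))"
  proof -
    have i1: "\<And>g. sum g (S_set m (Suc j)) = sum (g \<circ> (\<lambda>(r,ms). ms @ [r])) (SIGMA r:{1..m}. S_set (m-r) j)"
      unfolding S_set_Suc_last[of m j] by (rule sum.reindex[OF S_set_Suc_last_inj])
    have i2: "\<And>g. sum g (S_set n (Suc j)) = sum (g \<circ> (\<lambda>(s,ns). ins1 s ns)) (SIGMA s:{1..n}. S_set (n-s) j)"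
      unfolding S_set_Suc_ins[of n j] by (rule sum.reindex[OF S_set_Suc_ins_inj])
    show ?thesis unfolding i1 i2 by (simp add: case_prod_unfold)
  qed
  also have "\<dots> = (\<Sum>r\<in>{1..m}. \<Sum>ms\<in>S_set (m-r) j. \<Sum>s\<in>{1..n}. \<Sum>ns\<in>S_set (n-s) j.
       int (m choose r) * int (n choose s) * f_q q r s * T q j (m-r) (n-s) ms ns)"
  proof -
    have "(\<Sum>(r,ms)\<in>(SIGMA r:{1..m}. S_set (m-r) j). \<Sum>(s,ns)\<in>(SIGMA s:{1..n}. S_set (n-s) j).
       T q (Suc j) m n (ms @ [r]) (ins1 s ns)) = (\<Sum>r\<in>{1..m}. \<Sum>ms\<in>S_set (m-r) j. \<Sum>s\<in>{1..n}. \<Sum>ns\<in>S_set (n-s) j.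
       T q (Suc j) m n (ms @ [r]) (ins1 s ns))"
      by (simp add: sum.Sigma[symmetric] fin)
    also have "\<dots> = (\<Sum>r\<in>{1..m}. \<Sum>ms\<in>S_set (m-r) j. \<Sum>s\<in>{1..n}. \<Sum>ns\<in>S_set (n-s) j.
       int (m choose r) * int (n choose s) * f_q q r s * T q j (m-r) (n-s) ms ns)"
      by (intro sum.cong refl T_step) 
    finally show ?thesis .
  qed
  also have "\<dots> = (\<Sum>r\<in>{1..m}. \<Sum>s\<in>{1..n}. \<Sum>ms\<in>S_set (m-r) j. \<Sum>ns\<in>S_set (n-s) j.
       int (m choose r) * int (n choose s) * f_q q r s * T q j (m-r) (n-s) ms ns)"
    by (rule sum.cong[OF refl]) (rule sum.swap)
  also have "\<dots> = (\<Sum>r\<in>{1..m}. \<Sum>s\<in>{1..n}.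
    int (m choose r) * int (n choose s) * f_q q r s * P q j (m-r) (n-s))"
    unfolding P_def T_def by (simp add: sum_distrib_left mult.assoc)
  finally show ?thesis .
qed

definition G :: "nat \<Rightarrow> nat \<Rightarrow> nat \<Rightarrow> int" where
  "G q m n = (\<Sum>j\<le>min m n. P q j m n)"

lemma G_ext: assumes "min a b \<le> K" shows "(\<Sum>j\<le>K. P q j a b) = G q a b"
  unfolding G_def
  by (rule sum.mono_neutral_right) (use assms in \<open>auto intro: P_big\<close>)

lemma G_eq: "G q m n = 1 + (\<Sum>j=1..min m n. P q j m n)"
  unfolding G_def atMost_atLeast0 by (simp add: sum.atLeast_Suc_atMost P_0)

lemma G_rec: "G q m n = 1 + (\<Sum>r\<in>{1..m}. \<Sum>s\<in>{1..n}.
    int (m choose r) * int (n choose s) * f_q q r s * G q (m-r) (n-s))"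
proof (cases "min m n = 0")
  case True
  hence "{1..m} = {} \<or> {1..n} = {}" by auto
  thus ?thesis using True unfolding G_def by (auto simp: P_0)
next
  case False
  then obtain K where K: "min m n = Suc K" by (cases "min m n") auto
  have "G q m n = P q 0 m n + (\<Sum>j\<le>K. P q (Suc j) m n)"
    unfolding G_def K by (rule sum.atMost_Suc_shift)
  also have "(\<Sum>j\<le>K. P q (Suc j) m n) = (\<Sum>j\<le>K. \<Sum>r\<in>{1..m}. \<Sum>s\<in>{1..n}.
    int (m choose r) * int (n choose s) * f_q q r s * P q j (m-r) (n-s))"
    by (simp add: P_Suc)
  also have "\<dots> = (\<Sum>r\<in>{1..m}. \<Sum>s\<in>{1..n}. \<Sum>j\<le>K.
    int (m choose r) * int (n choose s) * f_q q r s * P q j (m-r) (n-s))"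
    by (subst sum.swap) (simp add: sum.swap[of _ "{..K}"])
  also have "\<dots> = (\<Sum>r\<in>{1..m}. \<Sum>s\<in>{1..n}.
    int (m choose r) * int (n choose s) * f_q q r s * G q (m-r) (n-s))"
  proof (intro sum.cong refl)
    fix r s assume r: "r \<in> {1..m}" and s: "s \<in> {1..n}"
    have "min (m-r) (n-s) \<le> K" using r s K by auto
    thus "(\<Sum>j\<le>K. int (m choose r) * int (n choose s) * f_q q r s * P q j (m-r) (n-s)) =
      int (m choose r) * int (n choose s) * f_q q r s * G q (m-r) (n-s)"
      by (simp add: sum_distrib_left[symmetric] G_ext)
  qed
  finally show ?thesis by (simp add: P_0)
qed




definition Vs :: "nat \<Rightarrow> 'a set \<Rightarrow> ('a \<Rightarrow> nat) set" where
  "Vs q D = {g. \<forall>x. (x \<in> D \<longrightarrow> 1 \<le> g x \<and> g x < q) \<and> (x \<notin> D \<longrightarrow> g x = 0)}"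

definition Ms :: "nat \<Rightarrow> 'a set \<Rightarrow> ('a \<Rightarrow> nat) \<Rightarrow> 'a set" where
  "Ms q D g = {x \<in> D. g x < q - 1}"

lemma card_Vs: assumes "finite D" shows "card (Vs q D) = (q - 1) ^ card D"
proof -
  let ?e = "\<lambda>f x. if x \<in> D then f x else (0::nat)"
  have eq: "Vs q D = ?e ` (PiE D (\<lambda>_. {1..<q}))"
  proof (intro set_eqI iffI)
    fix g assume g: "g \<in> Vs q D"
    have "g = ?e (restrict g D)" using g unfolding Vs_def by (auto simp: fun_eq_iff)
    moreover have "restrict g D \<in> PiE D (\<lambda>_. {1..<q})" using g unfolding Vs_def by auto
    ultimately show "g \<in> ?e ` (PiE D (\<lambda>_. {1..<q}))" by blast
  qed (auto simp: Vs_def PiE_def Pi_def)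
  have inj: "inj_on ?e (PiE D (\<lambda>_. {1..<q}))"
  proof (rule inj_onI)
    fix f g assume f: "f \<in> PiE D (\<lambda>_. {1..<q})" and g: "g \<in> PiE D (\<lambda>_. {1..<q})" and e: "?e f = ?e g"
    show "f = g"
    proof (rule PiE_ext[OF f g])
      fix x assume "x \<in> D" thus "f x = g x" using fun_cong[OF e, of x] by simp
    qed
  qed
  show ?thesis unfolding eq card_image[OF inj] card_PiE[OF assms] by simp
qed

lemma finite_Vs: assumes "finite D" shows "finite (Vs q D)"
proof -
  let ?e = "\<lambda>f x. if x \<in> D then f x else (0::nat)"
  have "Vs q D \<subseteq> ?e ` (PiE D (\<lambda>_. {1..<q}))"
  proof
    fix g assume g: "g \<in> Vs q D"
    have "g = ?e (restrict g D)" using g unfolding Vs_def by (auto simp: fun_eq_iff)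
    moreover have "restrict g D \<in> PiE D (\<lambda>_. {1..<q})" using g unfolding Vs_def by auto
    ultimately show "g \<in> ?e ` (PiE D (\<lambda>_. {1..<q}))" by blast
  qed
  thus ?thesis by (rule finite_subset) (use assms in \<open>auto intro: finite_PiE\<close>)
qed

lemma card_Vs0: assumes "q \<ge> 2" shows "card {g \<in> Vs q D. Ms q D g = {}} = 1"
proof -
  have "{g \<in> Vs q D. Ms q D g = {}} = {\<lambda>x. if x \<in> D then q - 1 else 0}"
  proof (intro set_eqI iffI)
    fix g assume "g \<in> {g \<in> Vs q D. Ms q D g = {}}"
    hence "\<forall>x. (x \<in> D \<longrightarrow> 1 \<le> g x \<and> g x < q) \<and> (x \<notin> D \<longrightarrow> g x = 0)" "\<forall>x\<in>D. \<not> g x < q - 1"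
      unfolding Vs_def Ms_def by auto
    hence "g = (\<lambda>x. if x \<in> D then q - 1 else 0)" by (force simp: fun_eq_iff)
    thus "g \<in> {\<lambda>x. if x \<in> D then q - 1 else 0}" by simp
  qed (use assms in \<open>auto simp: Vs_def Ms_def\<close>)
  thus ?thesis by simp
qed

lemma card_Vs1: assumes "q \<ge> 2" "finite D"
  shows "card {g \<in> Vs q D. card (Ms q D g) = 1} = card D * (q - 2)"
proof -
  let ?h = "\<lambda>(x,v) y. if y = x then v else if y \<in> D then q - 1 else (0::nat)"
  have eq: "{g \<in> Vs q D. card (Ms q D g) = 1} = ?h ` (D \<times> {1..<q-1})"
  proof (intro set_eqI iffI)
    fix g assume g: "g \<in> {g \<in> Vs q D. card (Ms q D g) = 1}"
    then obtain x where M: "Ms q D g = {x}" by (auto simp: card_Suc_eq)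
    have V: "\<forall>y. (y \<in> D \<longrightarrow> 1 \<le> g y \<and> g y < q) \<and> (y \<notin> D \<longrightarrow> g y = 0)" using g unfolding Vs_def by auto
    have x: "x \<in> D" "g x < q - 1" using M unfolding Ms_def by auto
    have oth: "\<And>y. y \<in> D \<Longrightarrow> y \<noteq> x \<Longrightarrow> g y = q - 1"
    proof -
      fix y assume "y \<in> D" "y \<noteq> x"
      hence "y \<notin> Ms q D g" using M by auto
      thus "g y = q - 1" using V \<open>y \<in> D\<close> unfolding Ms_def by force
    qed
    have "g = ?h (x, g x)" using V oth by (auto simp: fun_eq_iff)
    moreover have "(x, g x) \<in> D \<times> {1..<q-1}" using x V by auto
    ultimately show "g \<in> ?h ` (D \<times> {1..<q-1})" by blast
  next
    fix g assume "g \<in> ?h ` (D \<times> {1..<q-1})"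
    then obtain x v where xv: "x \<in> D" "1 \<le> v" "v < q - 1" and g: "g = ?h (x,v)" by auto
    have "g \<in> Vs q D" using xv assms unfolding g Vs_def by auto
    moreover have "Ms q D g = {x}" using xv assms unfolding g Ms_def by auto
    ultimately show "g \<in> {g \<in> Vs q D. card (Ms q D g) = 1}" by simp
  qed
  have inj: "inj_on ?h (D \<times> {1..<q-1})"
  proof (rule inj_onI)
    fix p p' assume p: "p \<in> D \<times> {1..<q-1}" "p' \<in> D \<times> {1..<q-1}" and e0: "?h p = ?h p'"
    obtain x v x' v' where pp: "p = (x,v)" "p' = (x',v')" by fastforce
    have a: "x \<in> D" "v \<in> {1..<q-1}" "x' \<in> D" "v' \<in> {1..<q-1}" using p pp by auto
    have e: "?h (x,v) = ?h (x',v')" using e0 pp by simp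
    have "x = x'"
    proof (rule ccontr)
      assume "x \<noteq> x'"
      hence "?h (x',v') x = q - 1" using a by auto
      moreover have "?h (x,v) x = v" by simp
      ultimately show False using fun_cong[OF e, of x] a by auto
    qed
    moreover have "v = v'" using fun_cong[OF e, of x] \<open>x = x'\<close> by simp
    ultimately show "p = p'" using pp by simp
  qed
  show ?thesis unfolding eq card_image[OF inj] card_cartesian_product by (simp add: numeral_2_eq_2)
qed

lemma card_Vs_split: assumes "q \<ge> 2" "finite D"
  shows "card {g \<in> Vs q D. 2 \<le> card (Ms q D g)} + 1 + card D * (q - 2) = (q - 1) ^ card D"
proof -
  have fin: "finite (Vs q D)" by (rule finite_Vs[OF assms(2)])
  have fM: "\<And>g. finite (Ms q D g)" using assms(2) unfolding Ms_def by auto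
  have "Vs q D = {g \<in> Vs q D. 2 \<le> card (Ms q D g)} \<union> ({g \<in> Vs q D. Ms q D g = {}} \<union> {g \<in> Vs q D. card (Ms q D g) = 1})"
  proof (intro set_eqI iffI)
    fix g assume g: "g \<in> Vs q D"
    have "card (Ms q D g) = 0 \<or> card (Ms q D g) = 1 \<or> 2 \<le> card (Ms q D g)" by auto
    thus "g \<in> {g \<in> Vs q D. 2 \<le> card (Ms q D g)} \<union> ({g \<in> Vs q D. Ms q D g = {}} \<union> {g \<in> Vs q D. card (Ms q D g) = 1})"
      using g fM[of g] by auto
  qed auto
  moreover have "card ({g \<in> Vs q D. 2 \<le> card (Ms q D g)} \<union> ({g \<in> Vs q D. Ms q D g = {}} \<union> {g \<in> Vs q D. card (Ms q D g) = 1}))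
    = card {g \<in> Vs q D. 2 \<le> card (Ms q D g)} + (card {g \<in> Vs q D. Ms q D g = {}} + card {g \<in> Vs q D. card (Ms q D g) = 1})"
    by (subst card_Un_disjoint, use fin in auto, subst card_Un_disjoint, use fin in auto)
  ultimately have "card (Vs q D) = card {g \<in> Vs q D. 2 \<le> card (Ms q D g)} + (card {g \<in> Vs q D. Ms q D g = {}} + card {g \<in> Vs q D. card (Ms q D g) = 1})"
    by simp
  thus ?thesis using card_Vs[OF assms(2)] card_Vs0[OF assms(1), of D] card_Vs1[OF assms] by simp
qed

lemma card_Vs_restrict:
  assumes "q \<ge> 2" "D' \<subseteq> D"
  shows "card {g \<in> Vs q D. Ms q D g \<subseteq> D' \<and> Pr (Ms q D g)} = card {h \<in> Vs q D'. Pr (Ms q D' h)}"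
proof -
  let ?f = "\<lambda>g x. if x \<in> D' then g x else (0::nat)"
  let ?f' = "\<lambda>h x. if x \<in> D' then h x else if x \<in> D then q - 1 else (0::nat)"
  have M1: "Ms q D' (?f g) = Ms q D g" if "Ms q D g \<subseteq> D'" for g
    using that assms(2) unfolding Ms_def by auto
  have M2: "Ms q D (?f' h) = Ms q D' h" for h
    using assms unfolding Ms_def by auto
  have "bij_betw ?f {g \<in> Vs q D. Ms q D g \<subseteq> D' \<and> Pr (Ms q D g)} {h \<in> Vs q D'. Pr (Ms q D' h)}"
  proof (rule bij_betw_byWitness[where f'="?f'"])
    show "\<forall>g\<in>{g \<in> Vs q D. Ms q D g \<subseteq> D' \<and> Pr (Ms q D g)}. ?f' (?f g) = g"
    proof
      fix g assume g: "g \<in> {g \<in> Vs q D. Ms q D g \<subseteq> D' \<and> Pr (Ms q D g)}"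
      show "?f' (?f g) = g"
      proof
        fix x
        show "?f' (?f g) x = g x"
        proof (cases "x \<in> D'")
          case False
          show ?thesis
          proof (cases "x \<in> D")
            case True
            hence "x \<notin> Ms q D g" using g False by auto
            thus ?thesis using g True False unfolding Vs_def Ms_def by force
          next
            case False2: False
            thus ?thesis using g False unfolding Vs_def by auto
          qed
        qed simp
      qed
    qed
    show "\<forall>h\<in>{h \<in> Vs q D'. Pr (Ms q D' h)}. ?f (?f' h) = h"
      unfolding Vs_def by (auto simp: fun_eq_iff)
    show "?f ` {g \<in> Vs q D. Ms q D g \<subseteq> D' \<and> Pr (Ms q D g)} \<subseteq> {h \<in> Vs q D'. Pr (Ms q D' h)}"
      using M1 assms unfolding Vs_def by auto
    show "?f' ` {h \<in> Vs q D'. Pr (Ms q D' h)} \<subseteq> {g \<in> Vs q D. Ms q D g \<subseteq> D' \<and> Pr (Ms q D g)}"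
    proof
      fix g assume "g \<in> ?f' ` {h \<in> Vs q D'. Pr (Ms q D' h)}"
      then obtain h where h: "h \<in> Vs q D'" "Pr (Ms q D' h)" and g: "g = ?f' h" by auto
      have "g \<in> Vs q D" using h assms unfolding g Vs_def by auto
      moreover have "Ms q D g = Ms q D' h" unfolding g by (rule M2)
      moreover have "Ms q D' h \<subseteq> D'" unfolding Ms_def by auto
      ultimately show "g \<in> {g \<in> Vs q D. Ms q D g \<subseteq> D' \<and> Pr (Ms q D g)}" using h by auto
    qed
  qed
  thus ?thesis by (rule bij_betw_same_card)
qed

definition pw :: "(nat \<times> nat) set \<Rightarrow> bool" where
  "pw M \<longleftrightarrow> (\<forall>x\<in>M. \<forall>y\<in>M. fst x = fst y \<or> snd x = snd y)"

lemma GB_card_W: assumes "q \<ge> 2"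
  shows "card (GBset q R S) = card {g \<in> Vs q (R \<times> S). pw (Ms q (R \<times> S) g)}"
proof -
  have "bij_betw case_prod (GBset q R S) {g \<in> Vs q (R \<times> S). pw (Ms q (R \<times> S) g)}"
  proof (rule bij_betw_byWitness[where f'=curry])
    show "\<forall>B\<in>GBset q R S. curry (case_prod B) = B" by simp
    show "\<forall>g\<in>{g \<in> Vs q (R \<times> S). pw (Ms q (R \<times> S) g)}. case_prod (curry g) = g" by simp
    show "case_prod ` GBset q R S \<subseteq> {g \<in> Vs q (R \<times> S). pw (Ms q (R \<times> S) g)}"
    proof
      fix g assume "g \<in> case_prod ` GBset q R S"
      then obtain B where B: "B \<in> GBset q R S" and g: "g = case_prod B" by auto
      have qmB: "qm q R S B" and pos: "\<forall>i\<in>R. \<forall>c\<in>S. 0 < B i c" and sf: "SF q R S B"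
        using B unfolding GBset_def by auto
      have "g \<in> Vs q (R \<times> S)" using qmB pos unfolding g Vs_def qm_def by (auto simp: Suc_le_eq)
      moreover have "pw (Ms q (R \<times> S) g)"
        unfolding pw_def
      proof (intro ballI)
        fix x y assume x: "x \<in> Ms q (R \<times> S) g" and y: "y \<in> Ms q (R \<times> S) g"
        obtain i c i' c' where xy: "x = (i,c)" "y = (i',c')" by fastforce
        have xi: "i \<in> R" "c \<in> S" "B i c < q - 1" "i' \<in> R" "c' \<in> S" "B i' c' < q - 1"
          using x y xy unfolding Ms_def g by auto
        show "fst x = fst y \<or> snd x = snd y"
        proof (rule ccontr)
          assume "\<not> (fst x = fst y \<or> snd x = snd y)"
          hence ne: "i \<noteq> i'" "c \<noteq> c'" using xy by auto
          have "0 < B i c'" "0 < B i' c" using pos xi by auto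
          hence "B i c = q - 1 \<or> B i' c' = q - 1"
            using sf[unfolded SF_def, rule_format, of i i' c' c] xi ne by auto
          thus False using xi by auto
        qed
      qed
      ultimately show "g \<in> {g \<in> Vs q (R \<times> S). pw (Ms q (R \<times> S) g)}" by simp
    qed
    show "curry ` {g \<in> Vs q (R \<times> S). pw (Ms q (R \<times> S) g)} \<subseteq> GBset q R S"
    proof
      fix B assume "B \<in> curry ` {g \<in> Vs q (R \<times> S). pw (Ms q (R \<times> S) g)}"
      then obtain g where g: "g \<in> Vs q (R \<times> S)" "pw (Ms q (R \<times> S) g)" and B: "B = curry g" by auto
      have V: "\<forall>i c. ((i,c) \<in> R \<times> S \<longrightarrow> 1 \<le> B i c \<and> B i c < q) \<and> ((i,c) \<notin> R \<times> S \<longrightarrow> B i c = 0)"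
        using g(1) unfolding Vs_def B by auto
      have "qm q R S B" using V unfolding qm_def by auto
      moreover have "\<forall>i\<in>R. \<forall>c\<in>S. 0 < B i c" using V by fastforce
      moreover have "SF q R S B"
        unfolding SF_def
      proof (intro ballI impI)
        fix i i' c c' assume in1: "i \<in> R" "i' \<in> R" "c \<in> S" "c' \<in> S" and h: "i \<noteq> i' \<and> c \<noteq> c' \<and> 0 < B i c \<and> 0 < B i' c'"
        show "B i c' = q - 1 \<or> B i' c = q - 1"
        proof (rule ccontr)
          assume "\<not> ?thesis"
          moreover have "B i c' < q" "B i' c < q" using V in1 by auto
          ultimately have "B i c' < q - 1" "B i' c < q - 1" by auto
          hence "(i,c') \<in> Ms q (R \<times> S) g" "(i',c) \<in> Ms q (R \<times> S) g" using in1 unfolding Ms_def B by auto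
          thus False using g(2) h unfolding pw_def by fastforce
        qed
      qed
      ultimately show "B \<in> GBset q R S" unfolding GBset_def by simp
    qed
  qed
  thus ?thesis by (rule bij_betw_same_card)
qed

lemma card_X: assumes "q \<ge> 2" "finite E"
  shows "int (card {h \<in> Vs q E. 2 \<le> card (Ms q E h)}) = (int q - 1) ^ card E - 1 - int (card E) * (int q - 2)"
proof -
  have "int (card {h \<in> Vs q E. 2 \<le> card (Ms q E h)}) + 1 + int (card E) * int (q - 2) = int ((q - 1) ^ card E)"
    using card_Vs_split[OF assms] by (metis of_nat_1 of_nat_add of_nat_mult)
  moreover have "int (q - 2) = int q - 2" "int (q - 1) = int q - 1" using assms by auto
  ultimately show ?thesis by (simp add: of_nat_power)
qed

lemma card_GB: assumes q: "q \<ge> 2" and fR: "finite R" and fS: "finite S"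
  shows "int (card (GBset q R S)) = f_q q (card R) (card S)"
proof -
  define D where "D = R \<times> S"
  have fD: "finite D" using fR fS unfolding D_def by auto
  define V where "V = Vs q D"
  define M where "M = Ms q D"
  have fV: "finite V" unfolding V_def by (rule finite_Vs[OF fD])
  have fM: "finite (M g)" for g unfolding M_def Ms_def using fD by auto
  have MD: "M g \<subseteq> D" for g unfolding M_def Ms_def by auto
  define Row where "Row i0 = {g \<in> V. M g \<subseteq> {i0} \<times> S \<and> 2 \<le> card (M g)}" for i0
  define Col where "Col c0 = {g \<in> V. M g \<subseteq> R \<times> {c0} \<and> 2 \<le> card (M g)}" for c0
  define U where "U = {g \<in> V. M g = {}} \<union> {g \<in> V. card (M g) = 1}"
  have W: "{g \<in> V. pw (M g)} = U \<union> (\<Union>i0\<in>R. Row i0) \<union> (\<Union>c0\<in>S. Col c0)"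
  proof (intro set_eqI iffI)
    fix g assume g: "g \<in> {g \<in> V. pw (M g)}"
    show "g \<in> U \<union> (\<Union>i0\<in>R. Row i0) \<union> (\<Union>c0\<in>S. Col c0)"
    proof (cases "card (M g) \<le> 1")
      case True
      hence "M g = {} \<or> card (M g) = 1" using fM[of g] by (cases "card (M g)") auto
      thus ?thesis using g unfolding U_def by auto
    next
      case False
      hence "M g \<noteq> {}" by auto
      then obtain x where x: "x \<in> M g" by blast
      have "card (M g - {x}) \<ge> 1" using False x fM[of g] by auto
      hence "M g - {x} \<noteq> {}" by (metis card.empty not_one_le_zero)
      then obtain y where y: "y \<in> M g" "y \<noteq> x" by blast
      have pwg: "\<forall>a\<in>M g. \<forall>b\<in>M g. fst a = fst b \<or> snd a = snd b" using g unfolding pw_def by auto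
      have xyD: "x \<in> R \<times> S" "y \<in> R \<times> S" using x y MD unfolding D_def by auto
      show ?thesis
      proof (cases "fst x = fst y")
        case True
        have "\<forall>z\<in>M g. fst z = fst x"
        proof
          fix z assume z: "z \<in> M g"
          show "fst z = fst x"
          proof (rule ccontr)
            assume ne: "fst z \<noteq> fst x"
            hence "snd z = snd x" "snd z = snd y" using pwg z x y True by metis+
            hence "x = y" using True by (simp add: prod_eq_iff)
            thus False using y by simp
          qed
        qed
        hence "M g \<subseteq> {fst x} \<times> S" using MD unfolding D_def by force
        moreover have "fst x \<in> R" using xyD by auto
        ultimately have "g \<in> Row (fst x)" using g False unfolding Row_def by auto
        thus ?thesis using \<open>fst x \<in> R\<close> by blast
      next
        case False2: False
        hence sxy: "snd x = snd y" using pwg x y by blast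
        have "\<forall>z\<in>M g. snd z = snd x"
        proof
          fix z assume z: "z \<in> M g"
          show "snd z = snd x"
          proof (rule ccontr)
            assume ne: "snd z \<noteq> snd x"
            hence "fst z = fst x" "fst z = fst y" using pwg z x y sxy by metis+
            thus False using False2 by simp
          qed
        qed
        hence "M g \<subseteq> R \<times> {snd x}" using MD unfolding D_def by force
        moreover have "snd x \<in> S" using xyD by auto
        ultimately have "g \<in> Col (snd x)" using g False unfolding Col_def by auto
        thus ?thesis using \<open>snd x \<in> S\<close> by blast
      qed
    qed
  next
    fix g assume g: "g \<in> U \<union> (\<Union>i0\<in>R. Row i0) \<union> (\<Union>c0\<in>S. Col c0)"
    hence gV: "g \<in> V" unfolding U_def Row_def Col_def by auto
    have "pw (M g)" using g unfolding U_def Row_def Col_def pw_def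
      by (auto simp: card_Suc_eq) (blast+)
    thus "g \<in> {g \<in> V. pw (M g)}" using gV by simp
  qed
  have fin_sub: "finite X" if "X \<subseteq> V" for X using fV that finite_subset by auto
  have cU: "card U = 1 + card D * (q - 2)"
  proof -
    have "card U = card {g \<in> V. M g = {}} + card {g \<in> V. card (M g) = 1}"
      unfolding U_def by (rule card_Un_disjoint) (auto intro: fin_sub)
    thus ?thesis using card_Vs0[OF q, of D] card_Vs1[OF q fD] unfolding V_def M_def by simp
  qed
  have cRow: "int (card (Row i0)) = (int q - 1) ^ card S - 1 - int (card S) * (int q - 2)" if "i0 \<in> R" for i0
  proof -
    have sub: "{i0} \<times> S \<subseteq> D" using that unfolding D_def by auto
    have "card (Row i0) = card {h \<in> Vs q ({i0} \<times> S). 2 \<le> card (Ms q ({i0} \<times> S) h)}"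
      unfolding Row_def V_def M_def using card_Vs_restrict[OF q sub, of "\<lambda>X. 2 \<le> card X"] by simp
    also have "int \<dots> = (int q - 1) ^ card ({i0} \<times> S) - 1 - int (card ({i0} \<times> S)) * (int q - 2)"
      by (rule card_X[OF q]) (use fS in auto)
    also have "card ({i0} \<times> S) = card S" by (simp add: card_cartesian_product)
    finally show ?thesis .
  qed
  have cCol: "int (card (Col c0)) = (int q - 1) ^ card R - 1 - int (card R) * (int q - 2)" if "c0 \<in> S" for c0
  proof -
    have sub: "R \<times> {c0} \<subseteq> D" using that unfolding D_def by auto
    have "card (Col c0) = card {h \<in> Vs q (R \<times> {c0}). 2 \<le> card (Ms q (R \<times> {c0}) h)}"
      unfolding Col_def V_def M_def using card_Vs_restrict[OF q sub, of "\<lambda>X. 2 \<le> card X"] by simp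
    also have "int \<dots> = (int q - 1) ^ card (R \<times> {c0}) - 1 - int (card (R \<times> {c0})) * (int q - 2)"
      by (rule card_X[OF q]) (use fR in auto)
    also have "card (R \<times> {c0}) = card R" by (simp add: card_cartesian_product)
    finally show ?thesis .
  qed
  have dRow: "card (\<Union>i0\<in>R. Row i0) = (\<Sum>i0\<in>R. card (Row i0))"
  proof (rule card_UN_disjoint[OF fR])
    show "\<forall>i\<in>R. finite (Row i)" unfolding Row_def by (auto intro: fin_sub)
    show "\<forall>i\<in>R. \<forall>j\<in>R. i \<noteq> j \<longrightarrow> Row i \<inter> Row j = {}"
    proof (intro ballI impI)
      fix i j :: nat assume "i \<noteq> j"
      { fix g assume "g \<in> Row i" "g \<in> Row j"
        hence "M g \<subseteq> {}" "2 \<le> card (M g)" using \<open>i \<noteq> j\<close> unfolding Row_def by auto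
        hence False by auto }
      thus "Row i \<inter> Row j = {}" by blast
    qed
  qed
  have dCol: "card (\<Union>c0\<in>S. Col c0) = (\<Sum>c0\<in>S. card (Col c0))"
  proof (rule card_UN_disjoint[OF fS])
    show "\<forall>i\<in>S. finite (Col i)" unfolding Col_def by (auto intro: fin_sub)
    show "\<forall>i\<in>S. \<forall>j\<in>S. i \<noteq> j \<longrightarrow> Col i \<inter> Col j = {}"
    proof (intro ballI impI)
      fix i j :: nat assume "i \<noteq> j"
      { fix g assume "g \<in> Col i" "g \<in> Col j"
        hence "M g \<subseteq> {}" "2 \<le> card (M g)" using \<open>i \<noteq> j\<close> unfolding Col_def by auto
        hence False by auto }
      thus "Col i \<inter> Col j = {}" by blast
    qed
  qed
  have disj1: "U \<inter> ((\<Union>i0\<in>R. Row i0) \<union> (\<Union>c0\<in>S. Col c0)) = {}"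
    unfolding U_def Row_def Col_def by auto
  have disj2: "(\<Union>i0\<in>R. Row i0) \<inter> (\<Union>c0\<in>S. Col c0) = {}"
  proof -
    { fix g i0 c0 assume "g \<in> Row i0" "g \<in> Col c0"
      hence "M g \<subseteq> {(i0, c0)}" "2 \<le> card (M g)" unfolding Row_def Col_def by auto
      hence False using card_mono[of "{(i0,c0)}" "M g"] by auto }
    thus ?thesis by blast
  qed
  have finR: "finite (\<Union>i0\<in>R. Row i0)" "finite (\<Union>c0\<in>S. Col c0)" "finite U"
    unfolding Row_def Col_def U_def by (auto intro: fin_sub)
  have "card (GBset q R S) = card {g \<in> V. pw (M g)}"
    unfolding V_def M_def D_def by (rule GB_card_W[OF q])
  also have "\<dots> = card U + (card (\<Union>i0\<in>R. Row i0) + card (\<Union>c0\<in>S. Col c0))"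
    unfolding W Un_assoc using finR disj1 disj2
    by (simp add: card_Un_disjoint)
  finally have "int (card (GBset q R S)) = int (card U) + (\<Sum>i0\<in>R. int (card (Row i0))) + (\<Sum>c0\<in>S. int (card (Col c0)))"
    unfolding dRow dCol by simp
  also have "\<dots> = 1 + int (card R * card S) * (int q - 2) + int (card R) * ((int q - 1) ^ card S - 1 - int (card S) * (int q - 2))
      + int (card S) * ((int q - 1) ^ card R - 1 - int (card R) * (int q - 2))"
    using cU cRow cCol q unfolding D_def by (simp add: card_cartesian_product of_nat_diff)
  also have "\<dots> = f_q q (card R) (card S)"
    unfolding f_q_def by (simp add: algebra_simps)
  finally show ?thesis .
qed




definition sl :: "nat \<Rightarrow> nat set \<Rightarrow> nat set \<Rightarrow> (nat \<Rightarrow> nat \<Rightarrow> nat) \<Rightarrow> bool" where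
  "sl q I J A \<longleftrightarrow> qm q I J A \<and>
     (\<forall>B. qm q I J B \<and> (\<forall>i\<in>I. (\<Sum>c\<in>J. B i c) = (\<Sum>c\<in>J. A i c))
          \<and> (\<forall>c\<in>J. (\<Sum>i\<in>I. B i c) = (\<Sum>i\<in>I. A i c)) \<longrightarrow> B = A)"

lemma sum_two_change:
  fixes f g :: "'a \<Rightarrow> nat"
  assumes "finite J" "c \<in> J" "c' \<in> J" "c \<noteq> c'" "f c + f c' = g c + g c'"
    "\<And>y. y \<in> J \<Longrightarrow> y \<noteq> c \<Longrightarrow> y \<noteq> c' \<Longrightarrow> f y = g y"
  shows "sum f J = sum g J"
proof -
  have e: "\<And>h :: 'a \<Rightarrow> nat. sum h J = h c + h c' + sum h (J - {c} - {c'})"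
    using assms(1-4) by (simp add: sum.remove[of J c] sum.remove[of "J - {c}" c'] add.assoc)
  have "sum f (J - {c} - {c'}) = sum g (J - {c} - {c'})" by (rule sum.cong) (use assms(6) in auto)
  thus ?thesis using e[of f] e[of g] assms(5) by simp
qed

lemma sl_SF:
  assumes q: "q \<ge> 2" and fin: "finite I" "finite J" and sl: "sl q I J A"
  shows "SF q I J A"
  unfolding SF_def
proof (intro ballI impI)
  fix i i' c c' assume mem: "i \<in> I" "i' \<in> I" "c \<in> J" "c' \<in> J" and h: "i \<noteq> i' \<and> c \<noteq> c' \<and> 0 < A i c \<and> 0 < A i' c'"
  show "A i c' = q - 1 \<or> A i' c = q - 1"
  proof (rule ccontr)
    assume n: "\<not> ?thesis"
    have qmA: "qm q I J A" using sl unfolding sl_def by auto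
    have "A i c' < q" "A i' c < q" using qmA mem unfolding qm_def by auto
    hence lt: "A i c' < q - 1" "A i' c < q - 1" using n by auto
    define B where "B = (\<lambda>x y. if (x,y) = (i,c) \<or> (x,y) = (i',c') then A x y - 1
        else if (x,y) = (i,c') \<or> (x,y) = (i',c) then A x y + 1 else A x y)"
    have bnd: "A i c < q" "A i' c' < q" using qmA mem unfolding qm_def by auto
    have "qm q I J B" unfolding qm_def B_def
    proof (intro allI conjI impI)
      fix x y assume "x \<in> I \<and> y \<in> J"
      thus "(if (x,y) = (i,c) \<or> (x,y) = (i',c') then A x y - 1
        else if (x,y) = (i,c') \<or> (x,y) = (i',c) then A x y + 1 else A x y) < q"
        using qmA lt bnd unfolding qm_def by auto
    next
      fix x y assume "\<not> (x \<in> I \<and> y \<in> J)"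
      thus "(if (x,y) = (i,c) \<or> (x,y) = (i',c') then A x y - 1
        else if (x,y) = (i,c') \<or> (x,y) = (i',c) then A x y + 1 else A x y) = 0"
        using qmA mem unfolding qm_def by auto
    qed
    moreover have "\<forall>x\<in>I. (\<Sum>y\<in>J. B x y) = (\<Sum>y\<in>J. A x y)"
    proof
      fix x assume x: "x \<in> I"
      show "(\<Sum>y\<in>J. B x y) = (\<Sum>y\<in>J. A x y)"
      proof (cases "x = i \<or> x = i'")
        case True
        show ?thesis
        proof (rule sum_two_change[OF fin(2) mem(3) mem(4)])
          show "c \<noteq> c'" using h by simp
          show "B x c + B x c' = A x c + A x c'" using True h unfolding B_def by auto
          show "\<And>y. y \<in> J \<Longrightarrow> y \<noteq> c \<Longrightarrow> y \<noteq> c' \<Longrightarrow> B x y = A x y" unfolding B_def by auto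
        qed
      next
        case False
        thus ?thesis unfolding B_def by (intro sum.cong) auto
      qed
    qed
    moreover have "\<forall>y\<in>J. (\<Sum>x\<in>I. B x y) = (\<Sum>x\<in>I. A x y)"
    proof
      fix y assume y: "y \<in> J"
      show "(\<Sum>x\<in>I. B x y) = (\<Sum>x\<in>I. A x y)"
      proof (cases "y = c \<or> y = c'")
        case True
        show ?thesis
        proof (rule sum_two_change[OF fin(1) mem(1) mem(2)])
          show "i \<noteq> i'" using h by simp
          show "B i y + B i' y = A i y + A i' y" using True h unfolding B_def by auto
          show "\<And>x. x \<in> I \<Longrightarrow> x \<noteq> i \<Longrightarrow> x \<noteq> i' \<Longrightarrow> B x y = A x y" unfolding B_def by auto
        qed
      next
        case False
        thus ?thesis unfolding B_def by (intro sum.cong) auto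
      qed
    qed
    ultimately have "B = A" using sl unfolding sl_def by blast
    moreover have "B i c \<noteq> A i c" using h unfolding B_def by auto
    ultimately show False by simp
  qed
qed

lemma sl_zero: assumes "finite I" "finite J" "q \<ge> 2" shows "sl q I J (\<lambda>_ _. 0)"
  unfolding sl_def
proof (intro conjI allI impI)
  show "qm q I J (\<lambda>_ _. 0)" using assms(3) unfolding qm_def by simp
next
  fix B assume h: "qm q I J B \<and> (\<forall>i\<in>I. (\<Sum>c\<in>J. B i c) = (\<Sum>c\<in>J. (0::nat))) \<and> (\<forall>c\<in>J. (\<Sum>i\<in>I. B i c) = (\<Sum>i\<in>I. (0::nat)))"
  show "B = (\<lambda>_ _. 0)"
  proof (intro ext)
    fix i c show "B i c = 0"
    proof (cases "i \<in> I \<and> c \<in> J")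
      case True
      hence "(\<Sum>c\<in>J. B i c) = 0" using h by simp
      thus ?thesis using True assms by simp
    next
      case False thus ?thesis using h unfolding qm_def by auto
    qed
  qed
qed

definition nzc :: "nat set \<Rightarrow> (nat \<Rightarrow> nat \<Rightarrow> nat) \<Rightarrow> nat \<Rightarrow> bool" where
  "nzc I A c \<longleftrightarrow> (\<exists>i\<in>I. 0 < A i c)"

definition Rdef :: "nat set \<Rightarrow> nat set \<Rightarrow> (nat \<Rightarrow> nat \<Rightarrow> nat) \<Rightarrow> nat set" where
  "Rdef I J A = {i \<in> I. \<forall>c\<in>J. nzc I A c \<longrightarrow> 0 < A i c}"

definition Sdef :: "nat set \<Rightarrow> nat set \<Rightarrow> (nat \<Rightarrow> nat \<Rightarrow> nat) \<Rightarrow> nat set" where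
  "Sdef I J A = {c \<in> J. nzc I A c \<and> (\<forall>i\<in>I. 0 < A i c \<longrightarrow> i \<in> Rdef I J A)}"

definition STRc :: "nat \<Rightarrow> nat set \<Rightarrow> nat set \<Rightarrow> nat set \<Rightarrow> nat set \<Rightarrow> (nat \<Rightarrow> nat \<Rightarrow> nat) \<Rightarrow> bool" where
  "STRc q I J R S A \<longleftrightarrow> R \<subseteq> I \<and> S \<subseteq> J \<and> R \<noteq> {} \<and> S \<noteq> {} \<and>
     (\<forall>i\<in>R. \<forall>c\<in>S. 0 < A i c) \<and> (\<forall>i\<in>I-R. \<forall>c\<in>S. A i c = 0) \<and>
     (\<forall>i\<in>R. \<forall>c\<in>J-S. A i c = (if nzc (I-R) A c then q - 1 else 0))"

lemma structure_lemma:
  assumes q: "q \<ge> 2" and fin: "finite I" "finite J" and qmA: "qm q I J A" and sf: "SF q I J A"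
    and nz: "A \<noteq> (\<lambda>_ _. 0)"
  shows "STRc q I J (Rdef I J A) (Sdef I J A) A"
proof -
  define supp where "supp i = {c \<in> J. 0 < A i c}" for i
  define NZ where "NZ = {c \<in> J. nzc I A c}"
  have chain: "supp i \<subseteq> supp i' \<or> supp i' \<subseteq> supp i" if "i \<in> I" "i' \<in> I" for i i'
  proof (rule ccontr)
    assume "\<not> ?thesis"
    then obtain c c' where c: "c \<in> supp i" "c \<notin> supp i'" and c': "c' \<in> supp i'" "c' \<notin> supp i" by auto
    have ne: "i \<noteq> i'" "c \<noteq> c'" using c c' by auto
    have cJ: "c \<in> J" "c' \<in> J" using c c' unfolding supp_def by auto
    have "A i c' = q - 1 \<or> A i' c = q - 1"
      using sf[unfolded SF_def, rule_format, of i i' c c'] that cJ ne c c' unfolding supp_def by auto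
    moreover have "A i c' = 0" "A i' c = 0" using c c' cJ unfolding supp_def by auto
    ultimately show False using q by auto
  qed
  obtain i0 c0 where ic0: "i0 \<in> I" "c0 \<in> J" "0 < A i0 c0"
  proof -
    obtain i c where "A i c \<noteq> 0" using nz by (auto simp: fun_eq_iff)
    moreover have "i \<in> I \<and> c \<in> J" using calculation qmA[unfolded qm_def, rule_format, of i c] by auto
    ultimately show ?thesis using that by auto
  qed
  have fsupp: "finite (supp i)" for i using fin unfolding supp_def by auto
  have maxrow: "\<exists>x\<in>X. \<forall>y\<in>X. supp y \<subseteq> supp x" if XI: "X \<subseteq> I" and Xne: "X \<noteq> {}" for X
  proof -
    have fX: "finite X" using XI fin finite_subset by auto
    obtain x where x: "x \<in> X" "\<forall>y\<in>X. card (supp y) \<le> card (supp x)"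
      using fX Xne
    proof -
      let ?m = "Max ((\<lambda>y. card (supp y)) ` X)"
      have "?m \<in> (\<lambda>y. card (supp y)) ` X" using fX Xne by (intro Max_in) auto
      then obtain x where "x \<in> X" "card (supp x) = ?m" by auto
      moreover have "\<forall>y\<in>X. card (supp y) \<le> ?m" using fX by auto
      ultimately show ?thesis using \<open>\<And>x. x \<in> X \<Longrightarrow> \<forall>y\<in>X. card (supp y) \<le> card (supp x) \<Longrightarrow> thesis\<close> by auto
    qed
    have "\<forall>y\<in>X. supp y \<subseteq> supp x"
    proof
      fix y assume y: "y \<in> X"
      show "supp y \<subseteq> supp x"
      proof (rule ccontr)
        assume "\<not> supp y \<subseteq> supp x"
        hence "supp x \<subset> supp y" using chain[of x y] x y XI by auto
        hence "card (supp x) < card (supp y)" using fsupp by (simp add: psubset_card_mono)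
        thus False using x y by auto
      qed
    qed
    thus ?thesis using x by auto
  qed
  have Rdef_eq: "Rdef I J A = {i \<in> I. NZ \<subseteq> supp i}"
    unfolding Rdef_def NZ_def supp_def by auto
  obtain r0 where r0: "r0 \<in> I" "\<forall>y\<in>I. supp y \<subseteq> supp r0" using maxrow[of I] ic0 by auto
  have "NZ \<subseteq> supp r0"
  proof
    fix c assume "c \<in> NZ"
    then obtain i where "i \<in> I" "0 < A i c" "c \<in> J" unfolding NZ_def nzc_def by auto
    thus "c \<in> supp r0" using r0 unfolding supp_def by auto
  qed
  hence R0: "r0 \<in> Rdef I J A" using r0 unfolding Rdef_eq by auto
  let ?R = "Rdef I J A" let ?S = "Sdef I J A"
  have RI: "?R \<subseteq> I" unfolding Rdef_def by auto
  have SJ: "?S \<subseteq> J" unfolding Sdef_def by auto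
  have i_prop: "\<forall>i\<in>?R. \<forall>c\<in>?S. 0 < A i c" unfolding Rdef_def Sdef_def by auto
  have ii_prop: "\<forall>i\<in>I-?R. \<forall>c\<in>?S. A i c = 0" unfolding Sdef_def by auto
  have Sne: "?S \<noteq> {}"
  proof (cases "I - ?R = {}")
    case True
    have "c0 \<in> ?S" unfolding Sdef_def nzc_def using ic0 True by auto
    thus ?thesis by auto
  next
    case False
    obtain i1 where i1: "i1 \<in> I - ?R" "\<forall>y\<in>I - ?R. supp y \<subseteq> supp i1" using maxrow[of "I - ?R"] False by auto
    then obtain c where c: "c \<in> NZ" "c \<notin> supp i1" unfolding Rdef_eq by auto
    have "c \<in> ?S"
      unfolding Sdef_def
    proof (intro CollectI conjI ballI impI)
      show "c \<in> J" "nzc I A c" using c unfolding NZ_def by auto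
      fix i assume "i \<in> I" "0 < A i c"
      show "i \<in> ?R"
      proof (rule ccontr)
        assume "i \<notin> ?R"
        hence "supp i \<subseteq> supp i1" using i1 \<open>i \<in> I\<close> by auto
        moreover have "c \<in> supp i" using \<open>0 < A i c\<close> \<open>c \<in> J\<close> unfolding supp_def by auto
        ultimately show False using c by auto
      qed
    qed
    thus ?thesis by auto
  qed
  have iii_prop: "\<forall>i\<in>?R. \<forall>c\<in>J-?S. A i c = (if nzc (I-?R) A c then q - 1 else 0)"
  proof (intro ballI)
    fix i c assume i: "i \<in> ?R" and c: "c \<in> J - ?S"
    show "A i c = (if nzc (I-?R) A c then q - 1 else 0)"
    proof (cases "nzc (I-?R) A c")
      case True
      then obtain i' where i': "i' \<in> I - ?R" "0 < A i' c" unfolding nzc_def by auto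
      obtain c1 where c1: "c1 \<in> ?S" using Sne by auto
      have "A i c = q - 1 \<or> A i' c1 = q - 1"
        using sf[unfolded SF_def, rule_format, of i i' c1 c] i i' c c1 RI SJ i_prop by auto
      moreover have "A i' c1 = 0" using ii_prop i' c1 by auto
      ultimately show ?thesis using True q by auto
    next
      case False
      show ?thesis
      proof (rule ccontr)
        assume "\<not> ?thesis"
        hence pos: "0 < A i c" using False by auto
        have "c \<in> ?S"
          unfolding Sdef_def
        proof (intro CollectI conjI ballI impI)
          show "c \<in> J" using c by auto
          show "nzc I A c" using pos i RI unfolding nzc_def by auto
          fix i' assume "i' \<in> I" "0 < A i' c"
          thus "i' \<in> ?R" using False unfolding nzc_def by (metis DiffI less_not_refl)
        qed
        thus False using c by auto
      qed
    qed
  qed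
  show ?thesis unfolding STRc_def using RI SJ R0 Sne i_prop ii_prop iii_prop by auto
qed

lemma STR_RS:
  assumes q: "q \<ge> 2" and st: "STRc q I J R S A"
  shows "Rdef I J A = R" "Sdef I J A = S"
proof -
  have RI: "R \<subseteq> I" and SJ: "S \<subseteq> J" and Rne: "R \<noteq> {}" and Sne: "S \<noteq> {}"
    and p1: "\<forall>i\<in>R. \<forall>c\<in>S. 0 < A i c" and p2: "\<forall>i\<in>I-R. \<forall>c\<in>S. A i c = 0"
    and p3: "\<forall>i\<in>R. \<forall>c\<in>J-S. A i c = (if nzc (I-R) A c then q - 1 else 0)"
    using st unfolding STRc_def by auto
  have nz_out: "nzc (I-R) A c" if cJS: "c \<in> J - S" and nzI: "nzc I A c" for c
  proof -
    obtain i' where i': "i' \<in> I" "0 < A i' c" using nzI unfolding nzc_def by auto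
    show ?thesis
    proof (cases "i' \<in> R")
      case True
      thus ?thesis using p3 cJS i' by (auto split: if_splits)
    next
      case False thus ?thesis using i' unfolding nzc_def by auto
    qed
  qed
  show R: "Rdef I J A = R"
  proof (intro set_eqI iffI)
    fix i assume i: "i \<in> Rdef I J A"
    obtain c where c: "c \<in> S" using Sne by auto
    obtain r where r: "r \<in> R" using Rne by auto
    have "nzc I A c" using p1 r c RI unfolding nzc_def by auto
    hence "0 < A i c" using i c SJ unfolding Rdef_def by auto
    moreover have "i \<in> I" using i unfolding Rdef_def by auto
    ultimately show "i \<in> R" using p2 c by (metis DiffI less_not_refl)
  next
    fix i assume i: "i \<in> R"
    have "0 < A i c" if "c \<in> J" "nzc I A c" for c
    proof (cases "c \<in> S")
      case True thus ?thesis using p1 i by auto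
    next
      case False
      hence "nzc (I-R) A c" using nz_out that by auto
      thus ?thesis using p3 i that False q by auto
    qed
    thus "i \<in> Rdef I J A" using i RI unfolding Rdef_def by auto
  qed
  show "Sdef I J A = S"
  proof (intro set_eqI iffI)
    fix c assume c: "c \<in> Sdef I J A"
    hence cJ: "c \<in> J" and nz: "nzc I A c" and allR: "\<forall>i\<in>I. 0 < A i c \<longrightarrow> i \<in> R"
      unfolding Sdef_def R by auto
    show "c \<in> S"
    proof (rule ccontr)
      assume "c \<notin> S"
      hence "nzc (I-R) A c" using nz_out cJ nz by auto
      thus False using allR unfolding nzc_def by auto
    qed
  next
    fix c assume c: "c \<in> S"
    obtain r where r: "r \<in> R" using Rne by auto
    have "nzc I A c" using p1 r c RI unfolding nzc_def by auto
    moreover have "\<forall>i\<in>I. 0 < A i c \<longrightarrow> i \<in> R" using p2 c by (metis DiffI less_not_refl)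
    ultimately show "c \<in> Sdef I J A" using c SJ unfolding Sdef_def R by auto
  qed
qed

lemma block_unique:
  assumes fin: "finite R" "finite S" and GB: "Blk \<in> GBset q R S" and qmB: "qm q R S B"
    and rows: "\<forall>i\<in>R. (\<Sum>c\<in>S. B i c) = (\<Sum>c\<in>S. Blk i c)"
    and cols: "\<forall>c\<in>S. (\<Sum>i\<in>R. B i c) = (\<Sum>i\<in>R. Blk i c)"
  shows "\<forall>i\<in>R. \<forall>c\<in>S. B i c = Blk i c"
proof -
  have qmK: "qm q R S Blk" and pos: "\<forall>i\<in>R. \<forall>c\<in>S. 0 < Blk i c" and sf: "SF q R S Blk"
    using GB unfolding GBset_def by auto
  have Ble: "B i c \<le> q - 1" if "i \<in> R" "c \<in> S" for i c using qmB that unfolding qm_def by fastforce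
  have Kle: "Blk i c \<le> q - 1" if "i \<in> R" "c \<in> S" for i c using qmK that unfolding qm_def by fastforce
  let ?M = "\<lambda>i c. Blk i c < q - 1"
  have share: "i = i' \<or> c = c'" if "i \<in> R" "c \<in> S" "i' \<in> R" "c' \<in> S" "?M i c" "?M i' c'" for i c i' c'
  proof (rule ccontr)
    assume "\<not> ?thesis"
    hence "Blk i c = q - 1 \<or> Blk i' c' = q - 1"
      using sf[unfolded SF_def, rule_format, of i i' c' c] that pos by auto
    thus False using that by auto
  qed
  have case_row: "\<forall>i\<in>R. \<forall>c\<in>S. B i c = Blk i c" if i0: "\<forall>i\<in>R. \<forall>c\<in>S. ?M i c \<longrightarrow> i = i0" for i0
  proof -
    have other: "B i c = Blk i c" if "i \<in> R" "i \<noteq> i0" "c \<in> S" for i c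
    proof -
      have full: "Blk i c' = q - 1" if "c' \<in> S" for c'
        using i0 \<open>i \<in> R\<close> \<open>i \<noteq> i0\<close> that Kle[of i c'] by force
      show ?thesis
        by (rule sum_mono_inv[of "B i" S "Blk i"]) (use rows \<open>i \<in> R\<close> Ble full fin that in auto)
    qed
    show ?thesis
    proof (intro ballI)
      fix i c assume i: "i \<in> R" and c: "c \<in> S"
      show "B i c = Blk i c"
      proof (cases "i = i0")
        case False thus ?thesis using other i c by auto
      next
        case True
        have "(\<Sum>i\<in>R. B i c) = B i0 c + (\<Sum>i\<in>R - {i0}. B i c)"
          using fin i True by (simp add: sum.remove)
        moreover have "(\<Sum>i\<in>R. Blk i c) = Blk i0 c + (\<Sum>i\<in>R - {i0}. Blk i c)"
          using fin i True by (simp add: sum.remove)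
        moreover have "(\<Sum>i\<in>R - {i0}. B i c) = (\<Sum>i\<in>R - {i0}. Blk i c)"
          by (rule sum.cong) (use other c in auto)
        ultimately show ?thesis using cols c True by simp
      qed
    qed
  qed
  have case_col: "\<forall>i\<in>R. \<forall>c\<in>S. B i c = Blk i c" if c0: "\<forall>i\<in>R. \<forall>c\<in>S. ?M i c \<longrightarrow> c = c0" for c0
  proof -
    have other: "B i c = Blk i c" if "c \<in> S" "c \<noteq> c0" "i \<in> R" for i c
    proof -
      have full: "Blk i' c = q - 1" if "i' \<in> R" for i'
        using c0 \<open>c \<in> S\<close> \<open>c \<noteq> c0\<close> that Kle[of i' c] by force
      show ?thesis
        by (rule sum_mono_inv[of "\<lambda>i. B i c" R "\<lambda>i. Blk i c"]) (use cols \<open>c \<in> S\<close> Ble full fin that in auto)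
    qed
    show ?thesis
    proof (intro ballI)
      fix i c assume i: "i \<in> R" and c: "c \<in> S"
      show "B i c = Blk i c"
      proof (cases "c = c0")
        case False thus ?thesis using other i c by auto
      next
        case True
        have "(\<Sum>c\<in>S. B i c) = B i c0 + (\<Sum>c\<in>S - {c0}. B i c)"
          using fin c True by (simp add: sum.remove)
        moreover have "(\<Sum>c\<in>S. Blk i c) = Blk i c0 + (\<Sum>c\<in>S - {c0}. Blk i c)"
          using fin c True by (simp add: sum.remove)
        moreover have "(\<Sum>c\<in>S - {c0}. B i c) = (\<Sum>c\<in>S - {c0}. Blk i c)"
          by (rule sum.cong) (use other i in auto)
        ultimately show ?thesis using rows i True by simp
      qed
    qed
  qed
  show ?thesis
  proof (cases "\<exists>i0. \<forall>i\<in>R. \<forall>c\<in>S. ?M i c \<longrightarrow> i = i0")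
    case True thus ?thesis using case_row by blast
  next
    case False
    then obtain i1 c1 where 1: "i1 \<in> R" "c1 \<in> S" "?M i1 c1" by blast
    from False obtain i2 c2 where 2: "i2 \<in> R" "c2 \<in> S" "?M i2 c2" "i2 \<noteq> i1" by blast
    have "c2 = c1" using share[OF 1(1,2) 2(1,2) 1(3) 2(3)] 2(4) by auto
    have "\<forall>i\<in>R. \<forall>c\<in>S. ?M i c \<longrightarrow> c = c1"
    proof (intro ballI impI)
      fix i c assume i: "i \<in> R" "c \<in> S" "?M i c"
      show "c = c1"
      proof (rule ccontr)
        assume "c \<noteq> c1"
        hence "i = i1" "i = i2" using share[OF i(1,2) 1(1,2) i(3) 1(3)] share[OF i(1,2) 2(1,2) i(3) 2(3)] \<open>c2 = c1\<close> by auto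
        thus False using 2(4) by simp
      qed
    qed
    thus ?thesis using case_col by blast
  qed
qed

definition restr :: "nat set \<Rightarrow> nat set \<Rightarrow> (nat \<Rightarrow> nat \<Rightarrow> nat) \<Rightarrow> nat \<Rightarrow> nat \<Rightarrow> nat" where
  "restr I J A = (\<lambda>i c. if i \<in> I \<and> c \<in> J then A i c else 0)"

lemma STR_sl:
  assumes q: "q \<ge> 2" and fI: "finite I" and fJ: "finite J" and qmA: "qm q I J A"
    and st: "STRc q I J R S A"
    and blk: "restr R S A \<in> GBset q R S"
    and rest: "sl q (I-R) (J-S) (restr (I-R) (J-S) A)"
  shows "sl q I J A"
  unfolding sl_def
proof (intro conjI allI impI)
  show "qm q I J A" by (rule qmA)
  fix B assume hB: "qm q I J B \<and> (\<forall>i\<in>I. (\<Sum>c\<in>J. B i c) = (\<Sum>c\<in>J. A i c)) \<and> (\<forall>c\<in>J. (\<Sum>i\<in>I. B i c) = (\<Sum>i\<in>I. A i c))"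
  hence qmB: "qm q I J B" and rowsB: "\<forall>i\<in>I. (\<Sum>c\<in>J. B i c) = (\<Sum>c\<in>J. A i c)"
    and colsB: "\<forall>c\<in>J. (\<Sum>i\<in>I. B i c) = (\<Sum>i\<in>I. A i c)" by auto
  have RI: "R \<subseteq> I" and SJ: "S \<subseteq> J"
    and p1: "\<forall>i\<in>R. \<forall>c\<in>S. 0 < A i c" and p2: "\<forall>i\<in>I-R. \<forall>c\<in>S. A i c = 0"
    and p3: "\<forall>i\<in>R. \<forall>c\<in>J-S. A i c = (if nzc (I-R) A c then q - 1 else 0)"
    using st unfolding STRc_def by auto
  have fR: "finite R" and fS: "finite S" using RI SJ fI fJ finite_subset by auto
  have splJ: "\<And>f :: nat \<Rightarrow> nat. sum f J = sum f S + sum f (J - S)"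
    using sum.subset_diff[OF SJ fJ] by (simp add: add.commute)
  have splI: "\<And>f :: nat \<Rightarrow> nat. sum f I = sum f R + sum f (I - R)"
    using sum.subset_diff[OF RI fI] by (simp add: add.commute)
  have Bbound: "B i c \<le> q - 1" if "i \<in> I" "c \<in> J" for i c using qmB that unfolding qm_def by fastforce
  have S1: "B i c = 0" if c: "c \<in> J - S" "\<not> nzc (I-R) A c" and i: "i \<in> I" for i c
  proof -
    have "\<forall>i\<in>I. A i c = 0"
    proof
      fix i assume i: "i \<in> I"
      show "A i c = 0"
      proof (cases "i \<in> R")
        case True thus ?thesis using p3 c by auto
      next
        case False thus ?thesis using c i unfolding nzc_def by auto
      qed
    qed
    hence "(\<Sum>i\<in>I. B i c) = 0" using colsB c by auto
    thus ?thesis using fI i by simp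
  qed
  have leJS: "B i c \<le> A i c" if "i \<in> R" "c \<in> J - S" for i c
  proof (cases "nzc (I-R) A c")
    case True thus ?thesis using p3 that Bbound[of i c] RI by auto
  next
    case False thus ?thesis using S1[of c i] that RI by auto
  qed
  have rowR: "(\<Sum>c\<in>S. A i c) \<le> (\<Sum>c\<in>S. B i c)" if i: "i \<in> R" for i
  proof -
    have "(\<Sum>c\<in>J - S. B i c) \<le> (\<Sum>c\<in>J - S. A i c)" by (rule sum_mono) (use leJS i in auto)
    moreover have "(\<Sum>c\<in>S. B i c) + (\<Sum>c\<in>J - S. B i c) = (\<Sum>c\<in>S. A i c) + (\<Sum>c\<in>J - S. A i c)"
      using rowsB i RI splJ by (metis subsetD)
    ultimately show ?thesis by linarith
  qed
  have colS: "(\<Sum>i\<in>R. B i c) + (\<Sum>i\<in>I - R. B i c) = (\<Sum>i\<in>R. A i c)" if c: "c \<in> S" for c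
  proof -
    have "(\<Sum>i\<in>I - R. A i c) = 0" using p2 c by simp
    thus ?thesis using colsB c SJ splI by (metis add.right_neutral subsetD)
  qed
  have tot: "(\<Sum>i\<in>R. \<Sum>c\<in>S. A i c) = (\<Sum>i\<in>R. \<Sum>c\<in>S. B i c)"
  proof (rule antisym)
    show "(\<Sum>i\<in>R. \<Sum>c\<in>S. A i c) \<le> (\<Sum>i\<in>R. \<Sum>c\<in>S. B i c)" by (rule sum_mono) (rule rowR)
    have "(\<Sum>i\<in>R. \<Sum>c\<in>S. B i c) = (\<Sum>c\<in>S. \<Sum>i\<in>R. B i c)" by (rule sum.swap)
    also have "\<dots> \<le> (\<Sum>c\<in>S. \<Sum>i\<in>R. A i c)" by (rule sum_mono) (use colS in fastforce)
    also have "\<dots> = (\<Sum>i\<in>R. \<Sum>c\<in>S. A i c)" by (rule sum.swap)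
    finally show "(\<Sum>i\<in>R. \<Sum>c\<in>S. B i c) \<le> (\<Sum>i\<in>R. \<Sum>c\<in>S. A i c)" .
  qed
  have rowEq: "(\<Sum>c\<in>S. B i c) = (\<Sum>c\<in>S. A i c)" if i: "i \<in> R" for i
    using sum_mono_inv[of "\<lambda>i. \<Sum>c\<in>S. A i c" R "\<lambda>i. \<Sum>c\<in>S. B i c" i] tot rowR i fR by auto
  have colEq: "(\<Sum>i\<in>R. B i c) = (\<Sum>i\<in>R. A i c)" if c: "c \<in> S" for c
  proof -
    have tot2: "(\<Sum>c\<in>S. \<Sum>i\<in>R. B i c) = (\<Sum>c\<in>S. \<Sum>i\<in>R. A i c)"
      using tot by (metis sum.swap)
    show ?thesis
      using sum_mono_inv[of "\<lambda>c. \<Sum>i\<in>R. B i c" S "\<lambda>c. \<Sum>i\<in>R. A i c" c] tot2 colS c fS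
      by (metis le_add1)
  qed
  have zeroS: "B i c = 0" if "i \<in> I - R" "c \<in> S" for i c
  proof -
    have "(\<Sum>i\<in>I - R. B i c) = 0" using colS[of c] colEq[of c] that by simp
    thus ?thesis using that fI by simp
  qed
  have RJS: "B i c = A i c" if i: "i \<in> R" and c: "c \<in> J - S" for i c
  proof -
    have "(\<Sum>c\<in>J - S. B i c) = (\<Sum>c\<in>J - S. A i c)"
      using rowsB i RI splJ rowEq[OF i] by (metis add_left_cancel subsetD)
    thus ?thesis using sum_mono_inv[of "\<lambda>c. B i c" "J - S" "\<lambda>c. A i c" c] leJS i c fJ by auto
  qed
  have blockEq: "\<forall>i\<in>R. \<forall>c\<in>S. restr R S B i c = restr R S A i c"
  proof (rule block_unique[OF fR fS blk])
    show "qm q R S (restr R S B)" using qmB RI SJ unfolding qm_def restr_def by auto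
    show "\<forall>i\<in>R. (\<Sum>c\<in>S. restr R S B i c) = (\<Sum>c\<in>S. restr R S A i c)"
      using rowEq unfolding restr_def by simp
    show "\<forall>c\<in>S. (\<Sum>i\<in>R. restr R S B i c) = (\<Sum>i\<in>R. restr R S A i c)"
      using colEq unfolding restr_def by simp
  qed
  have restEq: "restr (I-R) (J-S) B = restr (I-R) (J-S) A"
  proof -
    have "qm q (I-R) (J-S) (restr (I-R) (J-S) B)" using qmB unfolding qm_def restr_def by auto
    moreover have "\<forall>i\<in>I-R. (\<Sum>c\<in>J-S. restr (I-R) (J-S) B i c) = (\<Sum>c\<in>J-S. restr (I-R) (J-S) A i c)"
    proof
      fix i assume i: "i \<in> I - R"
      have "(\<Sum>c\<in>S. B i c) = 0" "(\<Sum>c\<in>S. A i c) = 0" using zeroS i p2 by auto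
      hence "(\<Sum>c\<in>J-S. B i c) = (\<Sum>c\<in>J-S. A i c)" using rowsB i splJ by (metis Diff_iff add_0)
      thus "(\<Sum>c\<in>J-S. restr (I-R) (J-S) B i c) = (\<Sum>c\<in>J-S. restr (I-R) (J-S) A i c)"
        using i unfolding restr_def by simp
    qed
    moreover have "\<forall>c\<in>J-S. (\<Sum>i\<in>I-R. restr (I-R) (J-S) B i c) = (\<Sum>i\<in>I-R. restr (I-R) (J-S) A i c)"
    proof
      fix c assume c: "c \<in> J - S"
      have "(\<Sum>i\<in>R. B i c) = (\<Sum>i\<in>R. A i c)" by (rule sum.cong) (use RJS c in auto)
      hence "(\<Sum>i\<in>I-R. B i c) = (\<Sum>i\<in>I-R. A i c)" using colsB c splI by (metis Diff_iff add_left_cancel)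
      thus "(\<Sum>i\<in>I-R. restr (I-R) (J-S) B i c) = (\<Sum>i\<in>I-R. restr (I-R) (J-S) A i c)"
        using c unfolding restr_def by simp
    qed
    ultimately show ?thesis using rest unfolding sl_def by blast
  qed
  show "B = A"
  proof (intro ext)
    fix i c
    show "B i c = A i c"
    proof (cases "i \<in> I \<and> c \<in> J")
      case False thus ?thesis using qmA qmB unfolding qm_def by auto
    next
      case True
      show ?thesis
      proof (cases "i \<in> R")
        case iR: True
        show ?thesis
        proof (cases "c \<in> S")
          case True thus ?thesis using blockEq iR unfolding restr_def by auto
        next
          case False thus ?thesis using RJS iR True \<open>i \<in> I \<and> c \<in> J\<close> by auto
        qed
      next
        case iR: False
        show ?thesis
        proof (cases "c \<in> S")
          case True thus ?thesis using zeroS p2 iR \<open>i \<in> I \<and> c \<in> J\<close> by auto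
        next
          case False thus ?thesis using fun_cong[OF fun_cong[OF restEq, of i], of c] iR \<open>i \<in> I \<and> c \<in> J\<close>
            unfolding restr_def by auto
        qed
      qed
    qed
  qed
qed

definition comb :: "nat \<Rightarrow> nat set \<Rightarrow> nat set \<Rightarrow> nat set \<Rightarrow> nat set \<Rightarrow> (nat \<Rightarrow> nat \<Rightarrow> nat) \<Rightarrow> (nat \<Rightarrow> nat \<Rightarrow> nat) \<Rightarrow> nat \<Rightarrow> nat \<Rightarrow> nat" where
  "comb q I J R S Blk A' = (\<lambda>i c. if i \<in> R then (if c \<in> S then Blk i c else if c \<in> J \<and> nzc (I-R) A' c then q - 1 else 0) else A' i c)"

lemma sl_qm: "sl q I J A \<Longrightarrow> qm q I J A" unfolding sl_def by auto

lemma comb_props: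
  assumes q: "q \<ge> 2" and fI: "finite I" and fJ: "finite J" and RI: "R \<subseteq> I" and SJ: "S \<subseteq> J"
    and Rne: "R \<noteq> {}" and Sne: "S \<noteq> {}" and blk: "Blk \<in> GBset q R S" and A': "sl q (I-R) (J-S) A'"
  shows "sl q I J (comb q I J R S Blk A')" "comb q I J R S Blk A' \<noteq> (\<lambda>_ _. 0)"
    "Rdef I J (comb q I J R S Blk A') = R" "Sdef I J (comb q I J R S Blk A') = S"
    "restr R S (comb q I J R S Blk A') = Blk" "restr (I-R) (J-S) (comb q I J R S Blk A') = A'"
proof -
  let ?C = "comb q I J R S Blk A'"
  have qmK: "qm q R S Blk" and pos: "\<forall>i\<in>R. \<forall>c\<in>S. 0 < Blk i c" using blk unfolding GBset_def by auto
  have qmA': "qm q (I-R) (J-S) A'" using A' by (rule sl_qm)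
  have qmC: "qm q I J ?C"
    unfolding qm_def comb_def using qmK qmA' RI SJ q unfolding qm_def by auto
  have nzcC: "nzc (I-R) ?C c = nzc (I-R) A' c" for c unfolding nzc_def comb_def by auto
  have st: "STRc q I J R S ?C"
    unfolding STRc_def
  proof (intro conjI)
    show "\<forall>i\<in>R. \<forall>c\<in>S. 0 < ?C i c" using pos unfolding comb_def by auto
    show "\<forall>i\<in>I-R. \<forall>c\<in>S. ?C i c = 0" using qmA' unfolding comb_def qm_def by auto
    show "\<forall>i\<in>R. \<forall>c\<in>J-S. ?C i c = (if nzc (I-R) ?C c then q - 1 else 0)"
      unfolding nzcC unfolding comb_def by auto
  qed (use RI SJ Rne Sne in auto)
  show rb: "restr R S ?C = Blk"
    using qmK unfolding restr_def comb_def qm_def by (auto simp: fun_eq_iff)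
  show ra: "restr (I-R) (J-S) ?C = A'"
    using qmA' unfolding restr_def comb_def qm_def by (auto simp: fun_eq_iff)
  show "sl q I J ?C" by (rule STR_sl[OF q fI fJ qmC st]) (use rb ra blk A' in auto)
  show "Rdef I J ?C = R" "Sdef I J ?C = S" using STR_RS[OF q st] by auto
  obtain i c where "i \<in> R" "c \<in> S" using Rne Sne by auto
  hence "0 < ?C i c" using pos unfolding comb_def by auto
  thus "?C \<noteq> (\<lambda>_ _. 0)" by (auto simp: fun_eq_iff)
qed

lemma decomp:
  assumes q: "q \<ge> 2" and fI: "finite I" and fJ: "finite J" and sl: "sl q I J A" and nz: "A \<noteq> (\<lambda>_ _. 0)"
  defines "R \<equiv> Rdef I J A" and "S \<equiv> Sdef I J A"
  shows "R \<subseteq> I" "S \<subseteq> J" "R \<noteq> {}" "S \<noteq> {}" "restr R S A \<in> GBset q R S"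
    "sl q (I-R) (J-S) (restr (I-R) (J-S) A)" "A = comb q I J R S (restr R S A) (restr (I-R) (J-S) A)"
proof -
  have qmA: "qm q I J A" using sl by (rule sl_qm)
  have sf: "SF q I J A" using sl_SF[OF q fI fJ sl] .
  have st: "STRc q I J R S A" unfolding R_def S_def by (rule structure_lemma[OF q fI fJ qmA sf nz])
  have RI: "R \<subseteq> I" and SJ: "S \<subseteq> J" and Rne: "R \<noteq> {}" and Sne: "S \<noteq> {}"
    and p1: "\<forall>i\<in>R. \<forall>c\<in>S. 0 < A i c" and p2: "\<forall>i\<in>I-R. \<forall>c\<in>S. A i c = 0"
    and p3: "\<forall>i\<in>R. \<forall>c\<in>J-S. A i c = (if nzc (I-R) A c then q - 1 else 0)"
    using st unfolding STRc_def by auto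
  show "R \<subseteq> I" "S \<subseteq> J" "R \<noteq> {}" "S \<noteq> {}" using RI SJ Rne Sne by auto
  show "restr R S A \<in> GBset q R S"
    unfolding GBset_def
  proof (intro CollectI conjI)
    show "qm q R S (restr R S A)" using qmA RI SJ unfolding qm_def restr_def by auto
    show "\<forall>i\<in>R. \<forall>c\<in>S. 0 < restr R S A i c" using p1 unfolding restr_def by auto
    show "SF q R S (restr R S A)" using sf RI SJ unfolding SF_def restr_def by (simp add: subset_iff)
  qed
  show "sl q (I-R) (J-S) (restr (I-R) (J-S) A)"
    unfolding sl_def
  proof (intro conjI allI impI)
    show "qm q (I-R) (J-S) (restr (I-R) (J-S) A)" using qmA unfolding qm_def restr_def by auto
    fix B' assume h: "qm q (I-R) (J-S) B' \<and> (\<forall>i\<in>I-R. (\<Sum>c\<in>J-S. B' i c) = (\<Sum>c\<in>J-S. restr (I-R) (J-S) A i c))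
        \<and> (\<forall>c\<in>J-S. (\<Sum>i\<in>I-R. B' i c) = (\<Sum>i\<in>I-R. restr (I-R) (J-S) A i c))"
    define B where "B = (\<lambda>i c. if i \<in> I - R \<and> c \<in> J - S then B' i c else A i c)"
    have splJ: "\<And>f :: nat \<Rightarrow> nat. sum f J = sum f S + sum f (J - S)"
      using sum.subset_diff[OF SJ fJ] by (simp add: add.commute)
    have splI: "\<And>f :: nat \<Rightarrow> nat. sum f I = sum f R + sum f (I - R)"
      using sum.subset_diff[OF RI fI] by (simp add: add.commute)
    have "qm q I J B" using h qmA unfolding B_def qm_def by auto
    moreover have "\<forall>i\<in>I. (\<Sum>c\<in>J. B i c) = (\<Sum>c\<in>J. A i c)"
    proof
      fix i assume i: "i \<in> I"
      show "(\<Sum>c\<in>J. B i c) = (\<Sum>c\<in>J. A i c)"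
      proof (cases "i \<in> R")
        case True thus ?thesis unfolding B_def by simp
      next
        case False
        have "(\<Sum>c\<in>J. B i c) = (\<Sum>c\<in>S. A i c) + (\<Sum>c\<in>J-S. B' i c)"
          using splJ[of "B i"] False i unfolding B_def by simp
        also have "(\<Sum>c\<in>J-S. B' i c) = (\<Sum>c\<in>J-S. A i c)"
          using h i False unfolding restr_def by simp
        finally show ?thesis using splJ[of "A i"] by simp
      qed
    qed
    moreover have "\<forall>c\<in>J. (\<Sum>i\<in>I. B i c) = (\<Sum>i\<in>I. A i c)"
    proof
      fix c assume c: "c \<in> J"
      show "(\<Sum>i\<in>I. B i c) = (\<Sum>i\<in>I. A i c)"
      proof (cases "c \<in> S")
        case True thus ?thesis unfolding B_def by simp
      next
        case False
        have "(\<Sum>i\<in>I. B i c) = (\<Sum>i\<in>R. A i c) + (\<Sum>i\<in>I-R. B' i c)"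
          using splI[of "\<lambda>i. B i c"] False c unfolding B_def by simp
        also have "(\<Sum>i\<in>I-R. B' i c) = (\<Sum>i\<in>I-R. A i c)"
          using h c False unfolding restr_def by simp
        finally show ?thesis using splI[of "\<lambda>i. A i c"] by simp
      qed
    qed
    ultimately have "B = A" using sl unfolding sl_def by blast
    show "B' = restr (I-R) (J-S) A"
    proof (intro ext)
      fix i c show "B' i c = restr (I-R) (J-S) A i c"
      proof (cases "i \<in> I - R \<and> c \<in> J - S")
        case True thus ?thesis using fun_cong[OF fun_cong[OF \<open>B = A\<close>, of i], of c] unfolding B_def restr_def by simp
      next
        case False thus ?thesis using h unfolding qm_def restr_def by auto
      qed
    qed
  qed
  show "A = comb q I J R S (restr R S A) (restr (I-R) (J-S) A)"
  proof (intro ext)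
    fix i c
    have nz_eq: "nzc (I-R) (restr (I-R) (J-S) A) c = nzc (I-R) A c" if "c \<in> J - S"
      using that unfolding nzc_def restr_def by auto
    show "A i c = comb q I J R S (restr R S A) (restr (I-R) (J-S) A) i c"
    proof (cases "i \<in> R")
      case True
      show ?thesis
      proof (cases "c \<in> S")
        case True thus ?thesis using \<open>i \<in> R\<close> unfolding comb_def restr_def by simp
      next
        case False
        show ?thesis
        proof (cases "c \<in> J")
          case True thus ?thesis using p3 \<open>i \<in> R\<close> False nz_eq unfolding comb_def by auto
        next
          case False2: False
          thus ?thesis using qmA \<open>i \<in> R\<close> False unfolding comb_def qm_def by auto
        qed
      qed
    next
      case False
      show ?thesis
      proof (cases "i \<in> I \<and> c \<in> J")
        case True thus ?thesis using False p2 unfolding comb_def restr_def by auto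
      next
        case False2: False thus ?thesis using qmA False unfolding comb_def restr_def qm_def by auto
      qed
    qed
  qed
qed

lemma finite_qm: assumes "finite I" "finite J" shows "finite {A. qm q I J A}"
proof -
  let ?e = "\<lambda>f i c. if (i,c) \<in> I \<times> J then f (i,c) else (0::nat)"
  have "{A. qm q I J A} \<subseteq> ?e ` PiE (I \<times> J) (\<lambda>_. {..<q})"
  proof
    fix A assume A: "A \<in> {A. qm q I J A}"
    have "A = ?e (restrict (case_prod A) (I \<times> J))" using A unfolding qm_def by (auto simp: fun_eq_iff)
    moreover have "restrict (case_prod A) (I \<times> J) \<in> PiE (I \<times> J) (\<lambda>_. {..<q})" using A unfolding qm_def by auto
    ultimately show "A \<in> ?e ` PiE (I \<times> J) (\<lambda>_. {..<q})" by blast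
  qed
  thus ?thesis by (rule finite_subset) (use assms in \<open>auto intro: finite_PiE\<close>)
qed

definition SL :: "nat \<Rightarrow> nat set \<Rightarrow> nat set \<Rightarrow> (nat \<Rightarrow> nat \<Rightarrow> nat) set" where
  "SL q I J = {A. sl q I J A}"

lemma finite_SL: assumes "finite I" "finite J" shows "finite (SL q I J)"
proof -
  have "SL q I J \<subseteq> {A. qm q I J A}" unfolding SL_def by (auto dest: sl_qm)
  thus ?thesis using finite_qm[OF assms, of q] finite_subset by blast
qed

lemma fibre:
  assumes q: "q \<ge> 2" and fI: "finite I" and fJ: "finite J" and RI: "R \<subseteq> I" and SJ: "S \<subseteq> J"
    and Rne: "R \<noteq> {}" and Sne: "S \<noteq> {}"
  shows "card {A \<in> SL q I J - {\<lambda>_ _. 0}. (Rdef I J A, Sdef I J A) = (R, S)} = card (GBset q R S) * card (SL q (I-R) (J-S))"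
proof -
  let ?f = "\<lambda>(Blk, A'). comb q I J R S Blk A'"
  have eq: "{A \<in> SL q I J - {\<lambda>_ _. 0}. (Rdef I J A, Sdef I J A) = (R, S)} = ?f ` (GBset q R S \<times> SL q (I-R) (J-S))"
  proof (intro set_eqI iffI)
    fix A assume A: "A \<in> {A \<in> SL q I J - {\<lambda>_ _. 0}. (Rdef I J A, Sdef I J A) = (R, S)}"
    hence sl: "sl q I J A" and nz: "A \<noteq> (\<lambda>_ _. 0)" and R: "Rdef I J A = R" and S: "Sdef I J A = S"
      unfolding SL_def by auto
    note d = decomp[OF q fI fJ sl nz, unfolded R S]
    show "A \<in> ?f ` (GBset q R S \<times> SL q (I-R) (J-S))"
      using d(5,6,7) unfolding SL_def by (intro image_eqI[where x="(restr R S A, restr (I-R) (J-S) A)"]) auto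
  next
    fix A assume "A \<in> ?f ` (GBset q R S \<times> SL q (I-R) (J-S))"
    then obtain Blk A' where b: "Blk \<in> GBset q R S" and a: "sl q (I-R) (J-S) A'" and A: "A = comb q I J R S Blk A'"
      unfolding SL_def by auto
    note c = comb_props[OF q fI fJ RI SJ Rne Sne b a]
    show "A \<in> {A \<in> SL q I J - {\<lambda>_ _. 0}. (Rdef I J A, Sdef I J A) = (R, S)}"
      using c unfolding A SL_def by auto
  qed
  have inj: "inj_on ?f (GBset q R S \<times> SL q (I-R) (J-S))"
  proof (rule inj_onI)
    fix x y assume x: "x \<in> GBset q R S \<times> SL q (I-R) (J-S)" and y: "y \<in> GBset q R S \<times> SL q (I-R) (J-S)"
      and e: "?f x = ?f y"
    obtain b1 a1 b2 a2 where xy: "x = (b1,a1)" "y = (b2,a2)" by fastforce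
    have h1: "b1 \<in> GBset q R S" "sl q (I-R) (J-S) a1" "b2 \<in> GBset q R S" "sl q (I-R) (J-S) a2"
      using x y xy unfolding SL_def by auto
    note c1 = comb_props[OF q fI fJ RI SJ Rne Sne h1(1,2)]
    note c2 = comb_props[OF q fI fJ RI SJ Rne Sne h1(3,4)]
    have "comb q I J R S b1 a1 = comb q I J R S b2 a2" using e xy by simp
    hence "b1 = b2" "a1 = a2" using c1(5,6) c2(5,6) by metis+
    thus "x = y" using xy by simp
  qed
  show ?thesis unfolding eq card_image[OF inj] card_cartesian_product ..
qed

lemma card_rec:
  assumes q: "q \<ge> 2" and fI: "finite I" and fJ: "finite J"
  shows "card (SL q I J) = 1 + (\<Sum>R\<in>Pow I - {{}}. \<Sum>S\<in>Pow J - {{}}. card (GBset q R S) * card (SL q (I-R) (J-S)))"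
proof -
  let ?Z = "\<lambda>_ _. 0 :: nat"
  let ?T = "(Pow I - {{}}) \<times> (Pow J - {{}})"
  let ?g = "\<lambda>A. (Rdef I J A, Sdef I J A)"
  have Z: "?Z \<in> SL q I J" unfolding SL_def using sl_zero[OF fI fJ q] by simp
  have fSL: "finite (SL q I J)" by (rule finite_SL[OF fI fJ])
  have c1: "card (SL q I J) = 1 + card (SL q I J - {?Z})"
    using card.remove[OF fSL Z] by simp
  have sub: "?g ` (SL q I J - {?Z}) \<subseteq> ?T"
  proof
    fix y assume "y \<in> ?g ` (SL q I J - {?Z})"
    then obtain A where A: "sl q I J A" "A \<noteq> ?Z" and y: "y = ?g A" unfolding SL_def by auto
    note d = decomp[OF q fI fJ A]
    show "y \<in> ?T" using d(1-4) y by auto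
  qed
  have "card (SL q I J - {?Z}) = (\<Sum>y\<in>?T. card {A \<in> SL q I J - {?Z}. ?g A = y})"
    using sum.group[OF _ _ sub, of "\<lambda>_. 1::nat"] fSL fI fJ by simp
  also have "\<dots> = (\<Sum>y\<in>?T. card (GBset q (fst y) (snd y)) * card (SL q (I - fst y) (J - snd y)))"
  proof (rule sum.cong[OF refl])
    fix y assume y: "y \<in> ?T"
    obtain R S where yRS: "y = (R,S)" by fastforce
    have "R \<subseteq> I" "S \<subseteq> J" "R \<noteq> {}" "S \<noteq> {}" using y yRS by auto
    thus "card {A \<in> SL q I J - {?Z}. ?g A = y} = card (GBset q (fst y) (snd y)) * card (SL q (I - fst y) (J - snd y))"
      using fibre[OF q fI fJ] yRS by simp
  qed
  also have "\<dots> = (\<Sum>R\<in>Pow I - {{}}. \<Sum>S\<in>Pow J - {{}}. card (GBset q R S) * card (SL q (I-R) (J-S)))"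
    by (subst sum.cartesian_product) (simp add: case_prod_unfold)
  finally show ?thesis using c1 by simp
qed




lemma sum_subsets_card:
  fixes F :: "nat \<Rightarrow> int"
  assumes fI: "finite I"
  shows "(\<Sum>R\<in>Pow I - {{}}. F (card R)) = (\<Sum>r\<in>{1..card I}. int (card I choose r) * F r)"
proof -
  have sub: "card ` (Pow I - {{}}) \<subseteq> {1..card I}"
  proof
    fix r assume "r \<in> card ` (Pow I - {{}})"
    then obtain R where R: "R \<subseteq> I" "R \<noteq> {}" "r = card R" by auto
    have "finite R" using R fI finite_subset by auto
    hence "1 \<le> card R" using R by (simp add: Suc_le_eq card_gt_0_iff)
    moreover have "card R \<le> card I" using R fI by (simp add: card_mono)
    ultimately show "r \<in> {1..card I}" using R by auto
  qed
  have "(\<Sum>R\<in>Pow I - {{}}. F (card R)) = (\<Sum>r\<in>{1..card I}. of_nat (card {R \<in> Pow I - {{}}. card R = r}) * F r)"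
    by (rule sum_fun_comp) (use fI sub in auto)
  also have "\<dots> = (\<Sum>r\<in>{1..card I}. int (card I choose r) * F r)"
  proof (rule sum.cong[OF refl])
    fix r assume r: "r \<in> {1..card I}"
    have "{R \<in> Pow I - {{}}. card R = r} = {R. R \<subseteq> I \<and> card R = r}" using r by auto
    thus "of_nat (card {R \<in> Pow I - {{}}. card R = r}) * F r = int (card I choose r) * F r"
      using n_subsets[OF fI, of r] by simp
  qed
  finally show ?thesis .
qed

lemma main:
  assumes q: "q \<ge> 2"
  shows "finite I \<Longrightarrow> finite J \<Longrightarrow> int (card (SL q I J)) = G q (card I) (card J)"
proof (induction "card I" arbitrary: I J rule: less_induct)
  case less
  note fI = less.prems(1) and fJ = less.prems(2)
  have "int (card (SL q I J)) = 1 + (\<Sum>R\<in>Pow I - {{}}. \<Sum>S\<in>Pow J - {{}}. int (card (GBset q R S)) * int (card (SL q (I-R) (J-S))))"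
    using card_rec[OF q fI fJ] by simp
  also have "\<dots> = 1 + (\<Sum>R\<in>Pow I - {{}}. \<Sum>S\<in>Pow J - {{}}. f_q q (card R) (card S) * G q (card I - card R) (card J - card S))"
  proof (intro arg_cong[where f="\<lambda>x. 1 + x"] sum.cong refl)
    fix R S assume R: "R \<in> Pow I - {{}}" and S: "S \<in> Pow J - {{}}"
    have fR: "finite R" and fS: "finite S" using R S fI fJ finite_subset by auto
    have cR: "card (I - R) = card I - card R" and cS: "card (J - S) = card J - card S"
      using R S fR fS by (auto simp: card_Diff_subset)
    have "card R > 0" using R fR by (auto simp: card_gt_0_iff)
    moreover have "card R \<le> card I" using R fI by (simp add: card_mono)
    ultimately have lt: "card (I - R) < card I" using cR by simp
    have "int (card (SL q (I-R) (J-S))) = G q (card (I - R)) (card (J - S))"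
      using less.hyps[OF lt] fI fJ by simp
    thus "int (card (GBset q R S)) * int (card (SL q (I-R) (J-S))) = f_q q (card R) (card S) * G q (card I - card R) (card J - card S)"
      using card_GB[OF q fR fS] cR cS by simp
  qed
  also have "\<dots> = 1 + (\<Sum>R\<in>Pow I - {{}}. \<Sum>s\<in>{1..card J}. int (card J choose s) * (f_q q (card R) s * G q (card I - card R) (card J - s)))"
    by (subst sum_subsets_card[OF fJ, where F="\<lambda>s. f_q q (card _) s * G q (card I - card _) (card J - s)"]) simp
  also have "\<dots> = 1 + (\<Sum>r\<in>{1..card I}. int (card I choose r) * (\<Sum>s\<in>{1..card J}. int (card J choose s) * (f_q q r s * G q (card I - r) (card J - s))))"
    by (subst sum_subsets_card[OF fI, where F="\<lambda>r. \<Sum>s\<in>{1..card J}. int (card J choose s) * (f_q q r s * G q (card I - r) (card J - s))"]) simp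
  also have "\<dots> = G q (card I) (card J)"
    by (subst G_rec) (simp add: sum_distrib_left mult.assoc mult.left_commute)
  finally show ?case .
qed

theorem theorem3p6:
  fixes q m n :: nat
  assumes "q \<ge> 2" and "m \<ge> 1" and "n \<ge> 1"
  shows "int (num_strong_lonesum q m n) =
    1 + (\<Sum>j=1..min m n. \<Sum>ms\<in>S_set m j. \<Sum>ns\<in>S_set n j.
           int (multinom m ms) * int (multinom n ns) *
           (\<Prod>i=1..j. f_q q (ms ! i) (ns ! (j + 1 - i))))"
proof -
  have "strong_lonesum q m n = sl q {..<m} {..<n}"
    unfolding strong_lonesum_def sl_def qary_matrix_def qm_def row_sum_def col_sum_def by (intro ext) auto
  hence "num_strong_lonesum q m n = card (SL q {..<m} {..<n})"
    unfolding num_strong_lonesum_def SL_def by simp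
  hence "int (num_strong_lonesum q m n) = G q m n" using main[OF assms(1)] by simp
  thus ?thesis unfolding G_eq P_def .
qed


end
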